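(* Let $\Omega\subset\mathbb{R}^n$ be a bounded domain and let $u:\overline{\Omega}\times[0,T]\to\mathbb{R}$ be a smooth solution of $$\frac{\partial u}{\partial t}=F(D^2u),$$ where $F$ is a $C^2$ function defined on the cone of positive definite symmetric $n\times n$ matrices which is monotone increasing ($F(A+B)\ge F(A)$ whenever $B$ is positive definite) and such that $F^*(A)=-F(A^{-1})$ is concave on this cone. Let $\varepsilon>0$. If $D^2u\ge\varepsilon I$ everywhere on $\Omega$ at $t=0$ and on $\partial\Omega$ for $0\le t\le T$, then $D^2u\ge\varepsilon I$ everywhere on $\Omega$ for $0\le t\le T$.
   Context: $D^2u$ is the spatial Hessian of $u$; matrix inequalities are in the sense of quadratic forms. *)

theory Defs
  imports "HOL-Analysis.Analysis"
begin

text \<open>C^k regularity on a set U (intended for open U), defined by iterated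
  Frechet derivatives: C^0 = continuous; C^(k+1) = differentiable with every
  directional derivative of class C^k.\<close>
fun Ck_on :: "nat \<Rightarrow> ('a::real_normed_vector \<Rightarrow> real) \<Rightarrow> 'a set \<Rightarrow> bool" where
  "Ck_on 0 f U = continuous_on U f"
| "Ck_on (Suc k) f U = (f differentiable_on U \<and>
      (\<forall>v. Ck_on k (\<lambda>x. frechet_derivative f (at x) v) U))"

definition smooth_on :: "('a::real_normed_vector \<Rightarrow> real) \<Rightarrow> 'a set \<Rightarrow> bool" where
  "smooth_on f U = (\<forall>k. Ck_on k f U)"

definition posdef :: "real^'n^'n \<Rightarrow> bool" where
  "posdef A = (transpose A = A \<and> (\<forall>x. x \<noteq> 0 \<longrightarrow> x \<bullet> (A *v x) > 0))"

definition mat_ge :: "real^'n^'n \<Rightarrow> real^'n^'n \<Rightarrow> bool" where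
  "mat_ge A B = (\<forall>x. x \<bullet> (A *v x) \<ge> x \<bullet> (B *v x))"

definition sym_part :: "real^'n^'n \<Rightarrow> real^'n^'n" where
  "sym_part A = (1/2) *\<^sub>R (A + transpose A)"

definition hess :: "(real^'n \<Rightarrow> real \<Rightarrow> real) \<Rightarrow> real^'n \<Rightarrow> real \<Rightarrow> real^'n^'n" where
  "hess u x t = (\<chi> i j. frechet_derivative
      (\<lambda>y. frechet_derivative (\<lambda>z. u z t) (at y) (axis j 1)) (at x) (axis i 1))"

definition time_deriv :: "(real^'n \<Rightarrow> real \<Rightarrow> real) \<Rightarrow> real^'n \<Rightarrow> real \<Rightarrow> real" where
  "time_deriv u x t = deriv (\<lambda>s. u x s) t"

end

theory Submission
  imports Defs
begin
definition dd :: "'a::real_normed_vector \<Rightarrow> ('a \<Rightarrow> real) \<Rightarrow> 'a \<Rightarrow> real" where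
  "dd v g = (\<lambda>p. frechet_derivative g (at p) v)"

fun Dl :: "'a::real_normed_vector list \<Rightarrow> ('a \<Rightarrow> real) \<Rightarrow> 'a \<Rightarrow> real" where
  "Dl [] g = g" | "Dl (a # as) g = dd a (Dl as g)"

definition sm :: "'a::real_normed_vector set \<Rightarrow> ('a \<Rightarrow> real) \<Rightarrow> bool" where
  "sm U g = (\<forall>k. Ck_on k g U)"

lemma sm_dd: "sm U g \<Longrightarrow> sm U (dd v g)"
  unfolding sm_def dd_def
proof
  fix k assume "\<forall>k. Ck_on k g U"
  then have "Ck_on (Suc k) g U" by blast
  then show "Ck_on k (\<lambda>p. frechet_derivative g (at p) v) U" by simp
qed

lemma sm_Dl: "sm U g \<Longrightarrow> sm U (Dl as g)"
  by (induction as) (auto simp: sm_dd)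

lemma sm_cont: "sm U g \<Longrightarrow> continuous_on U g"
  unfolding sm_def by (metis Ck_on.simps(1))

lemma sm_diff: assumes "sm U g" "open U" "p \<in> U" shows "g differentiable (at p)"
proof -
  have "Ck_on (Suc 0) g U" using assms(1) unfolding sm_def by blast
  then have "g differentiable_on U" by simp
  then show ?thesis using assms(2,3)
    by (simp add: differentiable_on_eq_differentiable_at)
qed

lemma sm_hasderiv: assumes "sm U g" "open U" "p \<in> U"
  shows "(g has_derivative (\<lambda>v. dd v g p)) (at p)"
  using sm_diff[OF assms] frechet_derivative_works unfolding dd_def by blast

lemma dd_linear: assumes "sm U g" "open U" "p \<in> U"
  shows "linear (\<lambda>v. dd v g p)"
  using sm_hasderiv[OF assms] has_derivative_linear by blast

lemma dd_cong: assumes "open U" "p \<in> U" "\<forall>q\<in>U. g1 q = g2 q"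
  shows "dd v g1 p = dd v g2 p"
proof -
  have "(\<lambda>f'. (g1 has_derivative f') (at p)) = (\<lambda>f'. (g2 has_derivative f') (at p))"
  proof (intro ext iffI)
    fix f' assume "(g1 has_derivative f') (at p)"
    then show "(g2 has_derivative f') (at p)"
      by (rule has_derivative_transform_within_open[OF _ assms(1,2)]) (use assms(3) in auto)
  next
    fix f' assume "(g2 has_derivative f') (at p)"
    then show "(g1 has_derivative f') (at p)"
      by (rule has_derivative_transform_within_open[OF _ assms(1,2)]) (use assms(3) in auto)
  qed
  then show ?thesis by (simp add: dd_def frechet_derivative_def)
qed

lemma Dl_cong: assumes "open U" "\<forall>q\<in>U. g1 q = g2 q"
  shows "\<forall>q\<in>U. Dl as g1 q = Dl as g2 q"
  using assms(2) by (induction as) (auto intro!: dd_cong[OF assms(1)])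

lemma line_deriv: assumes "sm U g" "open U" "p + s *\<^sub>R a \<in> U"
  shows "((\<lambda>r. g (p + r *\<^sub>R a)) has_real_derivative dd a g (p + s *\<^sub>R a)) (at s)"
proof -
  have l: "(g has_derivative (\<lambda>v. dd v g (p + s *\<^sub>R a))) (at (p + s *\<^sub>R a))"
    by (rule sm_hasderiv[OF assms])
  have lin: "linear (\<lambda>v. dd v g (p + s *\<^sub>R a))" by (rule dd_linear[OF assms])
  have "((\<lambda>r. p + r *\<^sub>R a) has_derivative (\<lambda>r. r *\<^sub>R a)) (at s)"
    by (auto intro!: derivative_eq_intros)
  from has_derivative_compose[OF this l]
  have "((\<lambda>r. g (p + r *\<^sub>R a)) has_derivative (\<lambda>r. dd (r *\<^sub>R a) g (p + s *\<^sub>R a))) (at s)"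
    by (simp add: o_def)
  moreover have "(\<lambda>r. dd (r *\<^sub>R a) g (p + s *\<^sub>R a)) = (\<lambda>r. dd a g (p + s *\<^sub>R a) * r)"
    using linear_scale[OF lin] by (auto simp: mult.commute)
  ultimately show ?thesis by (simp add: has_field_derivative_def)
qed

lemma dist_self_add: "dist p (p + x) = norm x"
  by (metis add_diff_cancel_left' dist_norm norm_minus_commute)

lemma delta_mvt:
  assumes sm: "sm U g" and U: "open U" and ball: "ball p r \<subseteq> U"
    and h: "0 < h" "h * (norm a + norm b) < r"
  shows "\<exists>\<sigma> \<rho>. 0 < \<sigma> \<and> \<sigma> < h \<and> 0 < \<rho> \<and> \<rho> < h \<and>
     g (p + h *\<^sub>R a + h *\<^sub>R b) - g (p + h *\<^sub>R a) - g (p + h *\<^sub>R b) + g p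
       = h * h * dd b (dd a g) (p + \<sigma> *\<^sub>R a + \<rho> *\<^sub>R b)"
proof -
  have mem: "p + s *\<^sub>R a + t *\<^sub>R b \<in> U" if "0 \<le> s" "s \<le> h" "0 \<le> t" "t \<le> h" for s t
  proof -
    have "norm (s *\<^sub>R a + t *\<^sub>R b) \<le> s * norm a + t * norm b"
      using norm_triangle_ineq[of "s *\<^sub>R a" "t *\<^sub>R b"] that by simp
    also have "\<dots> \<le> h * norm a + h * norm b"
      using that by (intro add_mono mult_right_mono) auto
    also have "\<dots> < r" using h by (simp add: algebra_simps)
    finally have "p + s *\<^sub>R a + t *\<^sub>R b \<in> ball p r" by (simp add: dist_self_add add.assoc)
    then show ?thesis using ball by blast
  qed
  define \<phi> where "\<phi> s = g ((p + h *\<^sub>R b) + s *\<^sub>R a) - g (p + s *\<^sub>R a)" for s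
  have d\<phi>: "DERIV \<phi> s :> dd a g ((p + h *\<^sub>R b) + s *\<^sub>R a) - dd a g (p + s *\<^sub>R a)"
    if "0 \<le> s" "s \<le> h" for s
  proof -
    have m1: "(p + h *\<^sub>R b) + s *\<^sub>R a \<in> U" using mem[of s h] that h by (simp add: algebra_simps)
    have m2: "p + s *\<^sub>R a \<in> U" using mem[of s 0] that h by simp
    show ?thesis unfolding \<phi>_def
      by (intro DERIV_diff line_deriv[OF sm U m1] line_deriv[OF sm U m2])
  qed
  obtain \<sigma> where \<sigma>: "0 < \<sigma>" "\<sigma> < h"
    "\<phi> h - \<phi> 0 = (h - 0) * (dd a g ((p + h *\<^sub>R b) + \<sigma> *\<^sub>R a) - dd a g (p + \<sigma> *\<^sub>R a))"
    using MVT2[OF h(1), of \<phi>, OF d\<phi>] by auto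
  define \<psi> where "\<psi> t = dd a g ((p + \<sigma> *\<^sub>R a) + t *\<^sub>R b)" for t
  have d\<psi>: "DERIV \<psi> t :> dd b (dd a g) ((p + \<sigma> *\<^sub>R a) + t *\<^sub>R b)" if "0 \<le> t" "t \<le> h" for t
  proof -
    have m: "(p + \<sigma> *\<^sub>R a) + t *\<^sub>R b \<in> U" using mem[of \<sigma> t] that \<sigma> by simp
    show ?thesis unfolding \<psi>_def by (rule line_deriv[OF sm_dd[OF sm] U m])
  qed
  obtain \<rho> where \<rho>: "0 < \<rho>" "\<rho> < h"
    "\<psi> h - \<psi> 0 = (h - 0) * dd b (dd a g) ((p + \<sigma> *\<^sub>R a) + \<rho> *\<^sub>R b)"
    using MVT2[OF h(1), of \<psi>, OF d\<psi>] by auto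
  have "g (p + h *\<^sub>R a + h *\<^sub>R b) - g (p + h *\<^sub>R a) - g (p + h *\<^sub>R b) + g p = \<phi> h - \<phi> 0"
    unfolding \<phi>_def by (simp add: algebra_simps)
  also have "\<dots> = h * (\<psi> h - \<psi> 0)"
    using \<sigma>(3) unfolding \<psi>_def by (simp add: algebra_simps)
  also have "\<dots> = h * h * dd b (dd a g) (p + \<sigma> *\<^sub>R a + \<rho> *\<^sub>R b)"
    using \<rho>(3) by simp
  finally show ?thesis using \<sigma> \<rho> by blast
qed

lemma schwarz:
  assumes sm: "sm U g" and U: "open U" and p: "p \<in> U"
  shows "dd a (dd b g) p = dd b (dd a g) p"
proof (rule ccontr)
  define X1 where "X1 = dd b (dd a g)"
  define X2 where "X2 = dd a (dd b g)"
  assume ne: "dd a (dd b g) p \<noteq> dd b (dd a g) p"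
  define e where "e = \<bar>X1 p - X2 p\<bar> / 2"
  have e: "e > 0" using ne unfolding e_def X1_def X2_def by auto
  have c1: "isCont X1 p" unfolding X1_def
    using sm_cont[OF sm_dd[OF sm_dd[OF sm]]] U p continuous_on_eq_continuous_at by blast
  have c2: "isCont X2 p" unfolding X2_def
    using sm_cont[OF sm_dd[OF sm_dd[OF sm]]] U p continuous_on_eq_continuous_at by blast
  obtain d1 where d1: "d1 > 0" "\<forall>q. dist q p < d1 \<longrightarrow> dist (X1 q) (X1 p) < e"
    using c1 e unfolding continuous_at_eps_delta by blast
  obtain d2 where d2: "d2 > 0" "\<forall>q. dist q p < d2 \<longrightarrow> dist (X2 q) (X2 p) < e"
    using c2 e unfolding continuous_at_eps_delta by blast
  obtain r where r: "r > 0" "ball p r \<subseteq> U" using U p open_contains_ball by blast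
  define R where "R = min r (min d1 d2)"
  have R: "R > 0" using r d1 d2 by (simp add: R_def)
  define X where "X = norm a + norm b + 1"
  define h where "h = R / (2 * X)"
  have Xp: "X > 0" unfolding X_def by (smt (verit) norm_ge_zero)
  have "2 * X > 0" using Xp by simp
  then have h0: "h > 0" using R by (simp add: h_def)
  have hR: "h * (norm a + norm b) < R"
  proof -
    have "h * (norm a + norm b) \<le> h * X" using h0 by (simp add: X_def)
    also have "\<dots> = R / 2" unfolding h_def using Xp by simp
    finally show ?thesis using R by simp
  qed
  have ballR: "ball p R \<subseteq> U" using r by (auto simp: R_def)
  have close: "dist (p + s *\<^sub>R a + t *\<^sub>R b) p < R" if "0 < s" "s < h" "0 < t" "t < h" for s t
  proof -
    have "norm (s *\<^sub>R a + t *\<^sub>R b) \<le> s * norm a + t * norm b"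
      using norm_triangle_ineq[of "s *\<^sub>R a" "t *\<^sub>R b"] that by simp
    also have "\<dots> \<le> h * norm a + h * norm b"
      using that by (intro add_mono mult_right_mono) auto
    also have "\<dots> < R" using hR by (simp add: algebra_simps)
    finally show ?thesis by (simp add: dist_self_add dist_commute add.assoc)
  qed
  obtain \<sigma> \<rho> where s1: "0 < \<sigma>" "\<sigma> < h" "0 < \<rho>" "\<rho> < h"
     "g (p + h *\<^sub>R a + h *\<^sub>R b) - g (p + h *\<^sub>R a) - g (p + h *\<^sub>R b) + g p
       = h * h * X1 (p + \<sigma> *\<^sub>R a + \<rho> *\<^sub>R b)"
    using delta_mvt[OF sm U ballR h0 hR] unfolding X1_def by blast
  have hR': "h * (norm b + norm a) < R" using hR by (simp add: add.commute)
  obtain \<sigma>' \<rho>' where s2: "0 < \<sigma>'" "\<sigma>' < h" "0 < \<rho>'" "\<rho>' < h"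
     "g (p + h *\<^sub>R b + h *\<^sub>R a) - g (p + h *\<^sub>R b) - g (p + h *\<^sub>R a) + g p
       = h * h * X2 (p + \<sigma>' *\<^sub>R b + \<rho>' *\<^sub>R a)"
    using delta_mvt[OF sm U ballR h0 hR'] unfolding X2_def by blast
  have eq: "X1 (p + \<sigma> *\<^sub>R a + \<rho> *\<^sub>R b) = X2 (p + \<sigma>' *\<^sub>R b + \<rho>' *\<^sub>R a)"
    using s1(5) s2(5) h0 by (simp add: algebra_simps)
  have q1: "dist (X1 (p + \<sigma> *\<^sub>R a + \<rho> *\<^sub>R b)) (X1 p) < e"
    using d1(2) close[OF s1(1-4)] by (simp add: R_def)
  have q2: "dist (X2 (p + \<sigma>' *\<^sub>R b + \<rho>' *\<^sub>R a)) (X2 p) < e"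
    using d2(2) close[OF s2(3,4,1,2)] by (simp add: R_def algebra_simps)
  have "\<bar>X1 p - X2 p\<bar> < 2 * e" using q1 q2 eq by (simp add: dist_real_def)
  then show False unfolding e_def by simp
qed

lemma Dl_move:
  assumes sm: "sm U g" and U: "open U"
  shows "\<forall>p\<in>U. Dl (pre @ x # post) g p = Dl (x # pre @ post) g p"
proof (induction pre)
  case Nil then show ?case by simp
next
  case (Cons b pre)
  show ?case
  proof
    fix p assume p: "p \<in> U"
    have "Dl ((b # pre) @ x # post) g p = dd b (Dl (pre @ x # post) g) p" by simp
    also have "\<dots> = dd b (Dl (x # pre @ post) g) p"
      by (rule dd_cong[OF U p Cons])
    also have "\<dots> = dd b (dd x (Dl (pre @ post) g)) p" by simp
    also have "\<dots> = dd x (dd b (Dl (pre @ post) g)) p"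
      by (rule schwarz[OF sm_Dl[OF sm] U p])
    also have "\<dots> = Dl (x # (b # pre) @ post) g p" by simp
    finally show "Dl ((b # pre) @ x # post) g p = Dl (x # (b # pre) @ post) g p" .
  qed
qed

lemma Dl_perm:
  assumes sm: "sm U g" and U: "open U"
  shows "mset as = mset bs \<Longrightarrow> \<forall>p\<in>U. Dl as g p = Dl bs g p"
proof (induction as arbitrary: bs)
  case Nil then show ?case by simp
next
  case (Cons x as)
  then have "x \<in> set bs" by (metis list.set_intros(1) set_mset_mset)
  then obtain pre post where bs: "bs = pre @ x # post" by (meson split_list)
  have m: "mset as = mset (pre @ post)" using Cons(2) bs by simp
  have IH: "\<forall>p\<in>U. Dl as g p = Dl (pre @ post) g p" using Cons(1)[OF m] .
  show ?case
  proof
    fix p assume p: "p \<in> U"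
    have "Dl (x # as) g p = dd x (Dl (pre @ post) g) p"
      using dd_cong[OF U p IH] by simp
    also have "\<dots> = Dl bs g p" using Dl_move[OF sm U] p bs by simp
    finally show "Dl (x # as) g p = Dl bs g p" .
  qed
qed

lemma Dl_front_sum:
  assumes sm: "sm U g" and U: "open U" and p: "p \<in> U" and fin: "finite I"
  shows "Dl ((\<Sum>i\<in>I. c i *\<^sub>R a i) # rest) g p = (\<Sum>i\<in>I. c i * Dl (a i # rest) g p)"
proof -
  have lin: "linear (\<lambda>v. dd v (Dl rest g) p)" by (rule dd_linear[OF sm_Dl[OF sm] U p])
  show ?thesis using linear_sum[OF lin, of "\<lambda>i. c i *\<^sub>R a i" I] linear_scale[OF lin]
    by simp
qed

lemma Dl_front_add:
  assumes sm: "sm U g" and U: "open U" and p: "p \<in> U"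
  shows "Dl ((a + b) # rest) g p = Dl (a # rest) g p + Dl (b # rest) g p"
    and "Dl ((c *\<^sub>R a) # rest) g p = c * Dl (a # rest) g p"
    and "Dl ((- a) # rest) g p = - Dl (a # rest) g p"
    and "Dl ((a - b) # rest) g p = Dl (a # rest) g p - Dl (b # rest) g p"
proof -
  have lin: "linear (\<lambda>v. dd v (Dl rest g) p)" by (rule dd_linear[OF sm_Dl[OF sm] U p])
  show "Dl ((a + b) # rest) g p = Dl (a # rest) g p + Dl (b # rest) g p"
    using linear_add[OF lin] by simp
  show "Dl ((c *\<^sub>R a) # rest) g p = c * Dl (a # rest) g p"
    using linear_scale[OF lin] by simp
  show "Dl ((- a) # rest) g p = - Dl (a # rest) g p"
    using linear_neg[OF lin] by simp
  show "Dl ((a - b) # rest) g p = Dl (a # rest) g p - Dl (b # rest) g p"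
    using linear_diff[OF lin] by simp
qed

definition sp :: "real^'n \<Rightarrow> (real^'n) \<times> real" where "sp w = (w, 0)"
definition tau :: "(real^'n) \<times> real" where "tau = (0, 1)"
definition E :: "'n::finite \<Rightarrow> (real^'n) \<times> real" where "E i = sp (axis i 1)"
definition HM :: "((real^'n) \<times> real \<Rightarrow> real) \<Rightarrow> (real^'n) \<times> real \<Rightarrow> real^'n^'n" where
  "HM g p = (\<chi> i j. Dl [E i, E j] g p)"

lemma sp_expand: "sp w = (\<Sum>i\<in>UNIV. w$i *\<^sub>R E i)"
proof -
  have "w = (\<Sum>i\<in>UNIV. w$i *\<^sub>R axis i 1)"
    by (metis (full_types) basis_expansion scalar_mult_eq_scaleR)
  then show ?thesis unfolding E_def sp_def
    by (metis (mono_tags, lifting) sum.cong sum.neutral_const sum_prod scaleR_Pair scaleR_zero_right)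
qed

lemma sp_add: "sp (a + b) = sp a + sp b" and sp_scale: "sp (c *\<^sub>R a) = c *\<^sub>R sp a"
  and sp_neg: "sp (- a) = - sp a" and sp_diff: "sp (a - b) = sp a - sp b"
  by (auto simp: sp_def)

lemma Dl_swap2:
  assumes "sm U g" "open U" "p \<in> U"
  shows "Dl [a, b] g p = Dl [b, a] g p"
  using Dl_perm[OF assms(1,2), of "[a,b]" "[b,a]"] assms(3) by simp

lemma HM_mult:
  assumes sm: "sm U g" and U: "open U" and p: "p \<in> U"
  shows "(HM g p *v w) $ i = Dl [E i, sp w] g p"
proof -
  have "Dl [E i, sp w] g p = Dl [sp w, E i] g p" by (rule Dl_swap2[OF sm U p])
  also have "\<dots> = (\<Sum>j\<in>UNIV. w$j * Dl [E j, E i] g p)"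
    unfolding sp_expand by (rule Dl_front_sum[OF sm U p]) simp
  also have "\<dots> = (\<Sum>j\<in>UNIV. Dl [E i, E j] g p * w$j)"
    using Dl_swap2[OF sm U p] by (simp add: mult.commute)
  finally show ?thesis by (simp add: HM_def matrix_vector_mult_def)
qed

lemma HM_quad:
  assumes sm: "sm U g" and U: "open U" and p: "p \<in> U"
  shows "v \<bullet> (HM g p *v w) = Dl [sp v, sp w] g p"
proof -
  have "v \<bullet> (HM g p *v w) = (\<Sum>i\<in>UNIV. v$i * Dl [E i, sp w] g p)"
    by (simp add: inner_vec_def HM_mult[OF assms])
  also have "\<dots> = Dl [sp v, sp w] g p"
    unfolding sp_expand[of v] by (rule Dl_front_sum[OF sm U p, symmetric]) simp
  finally show ?thesis .
qed

lemma HM_sym: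
  assumes sm: "sm U g" and U: "open U" and p: "p \<in> U"
  shows "transpose (HM g p) = HM g p"
  using Dl_swap2[OF assms] by (simp add: HM_def transpose_def vec_eq_iff)

lemma open_slice:
  assumes "open (U::('a::real_normed_vector \<times> real) set)"
  shows "open {y. (y, t) \<in> U}"
proof -
  have "continuous_on UNIV (\<lambda>y::'a. (y, t))" by (intro continuous_intros)
  from open_vimage[OF assms this] show ?thesis by (simp add: vimage_def)
qed

lemma slice_fd:
  assumes sm: "sm U g" and U: "open U" and p: "(y, t) \<in> U"
  shows "frechet_derivative (\<lambda>z. g (z, t)) (at y) w = dd (w, 0) g (y, t)"
proof -
  have d: "(g has_derivative (\<lambda>v. dd v g (y, t))) (at (y, t))" by (rule sm_hasderiv[OF assms])
  have "((\<lambda>z. (z, t)) has_derivative (\<lambda>w. (w, 0))) (at y)"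
    by (auto intro!: derivative_eq_intros)
  from has_derivative_compose[OF this d]
  have "((\<lambda>z. g (z, t)) has_derivative (\<lambda>w. dd (w, 0) g (y, t))) (at y)" by (simp add: o_def)
  from frechet_derivative_at[OF this] show ?thesis by (metis)
qed

lemma hess_Dl:
  fixes u :: "real^'n \<Rightarrow> real \<Rightarrow> real"
  assumes sm: "sm U (\<lambda>(x, t). u x t)" and U: "open U" and p: "(x, t) \<in> U"
  shows "hess u x t = HM (\<lambda>(x, t). u x t) (x, t)"
proof -
  define f where "f = (\<lambda>(x, t). u x t)"
  have smf: "sm U f" using sm by (simp add: f_def)
  have *: "frechet_derivative (\<lambda>y. frechet_derivative (\<lambda>z. u z t) (at y) (axis j 1)) (at x) (axis i 1)
        = Dl [E i, E j] f (x, t)" for i j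
  proof -
    have eq: "\<forall>y\<in>{y. (y, t) \<in> U}. frechet_derivative (\<lambda>z. u z t) (at y) (axis j 1) = dd (axis j 1, 0) f (y, t)"
    proof
      fix y assume "y \<in> {y. (y, t) \<in> U}"
      then have "(y, t) \<in> U" by simp
      from slice_fd[OF smf U this] show "frechet_derivative (\<lambda>z. u z t) (at y) (axis j 1) = dd (axis j 1, 0) f (y, t)"
        by (simp add: f_def)
    qed
    have "frechet_derivative (\<lambda>y. frechet_derivative (\<lambda>z. u z t) (at y) (axis j 1)) (at x) (axis i 1)
        = frechet_derivative (\<lambda>y. dd (axis j 1, 0) f (y, t)) (at x) (axis i 1)"
      using dd_cong[OF open_slice[OF U] _ eq, of x "axis i 1"] p by (simp add: dd_def)
    also have "\<dots> = dd (axis i 1, 0) (dd (axis j 1, 0) f) (x, t)"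
      by (rule slice_fd[OF sm_dd[OF smf] U p])
    finally show ?thesis by (simp add: E_def sp_def)
  qed
  show ?thesis unfolding hess_def HM_def f_def[symmetric] using * by simp
qed

lemma time_deriv_has:
  fixes u :: "real^'n \<Rightarrow> real \<Rightarrow> real"
  assumes sm: "sm U (\<lambda>(x, t). u x t)" and U: "open U" and p: "(x, t) \<in> U"
  shows "((\<lambda>s. u x s) has_real_derivative Dl [tau] (\<lambda>(x, t). u x t) (x, t)) (at t)"
proof -
  define f where "f = (\<lambda>(x, t). u x t)"
  have smf: "sm U f" using sm by (simp add: f_def)
  have d: "(f has_derivative (\<lambda>v. dd v f (x, t))) (at (x, t))" by (rule sm_hasderiv[OF smf U p])
  have "((\<lambda>s. (x, s)) has_derivative (\<lambda>s. s *\<^sub>R tau)) (at t)"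
    by (auto intro!: derivative_eq_intros simp: tau_def)
  from has_derivative_compose[OF this d]
  have "((\<lambda>s. f (x, s)) has_derivative (\<lambda>s. dd (s *\<^sub>R tau) f (x, t))) (at t)" by (simp add: o_def)
  moreover have "(\<lambda>s. dd (s *\<^sub>R tau) f (x, t)) = (\<lambda>s. dd tau f (x, t) * s)"
    using linear_scale[OF dd_linear[OF smf U p]] by (auto simp: mult.commute)
  ultimately show ?thesis by (simp add: has_field_derivative_def f_def)
qed

lemma time_deriv_Dl:
  fixes u :: "real^'n \<Rightarrow> real \<Rightarrow> real"
  assumes sm: "sm U (\<lambda>(x, t). u x t)" and U: "open U" and p: "(x, t) \<in> U"
  shows "time_deriv u x t = Dl [tau] (\<lambda>(x, t). u x t) (x, t)"
  unfolding time_deriv_def using DERIV_imp_deriv[OF time_deriv_has[OF assms]] .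

lemma quad_expand: "x \<bullet> (M *v x) = (\<Sum>i\<in>UNIV. x$i * (\<Sum>j\<in>UNIV. M$i$j * x$j))"
  by (simp add: inner_vec_def matrix_vector_mult_def)

lemma coercive_family:
  fixes M :: "'a::topological_space \<Rightarrow> real^'n^'n"
  assumes K: "compact K" and cont: "\<And>i j. continuous_on K (\<lambda>p. M p $ i $ j)"
    and pos: "\<And>p x. p \<in> K \<Longrightarrow> x \<noteq> 0 \<Longrightarrow> x \<bullet> (M p *v x) > 0"
  shows "\<exists>c>0. \<forall>p\<in>K. \<forall>x. x \<bullet> (M p *v x) \<ge> c * (norm x)^2"
proof (cases "K = {}")
  case True then show ?thesis by (intro exI[of _ 1]) auto
next
  case False
  define S where "S = K \<times> sphere (0::real^'n) 1"
  have cS: "compact S" unfolding S_def by (intro compact_Times K compact_sphere)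
  have neS: "S \<noteq> {}"
  proof -
    obtain p where "p \<in> K" using False by blast
    moreover have "axis undefined (1::real) \<in> sphere (0::real^'n) 1" by simp
    ultimately show ?thesis unfolding S_def by blast
  qed
  define q where "q z = snd z \<bullet> (M (fst z) *v snd z)" for z
  have cq: "continuous_on S q"
  proof -
    have ce: "continuous_on S (\<lambda>z. M (fst z) $ i $ j)" for i j
    proof -
      have "fst ` S \<subseteq> K" by (auto simp: S_def)
      then show ?thesis
        by (rule continuous_on_compose2[OF cont[of i j] continuous_on_fst[OF continuous_on_id]])
    qed
    have "continuous_on S (\<lambda>z. (\<Sum>i\<in>UNIV. snd z $ i * (\<Sum>j\<in>UNIV. M (fst z) $ i $ j * snd z $ j)))"
      by (intro continuous_on_sum continuous_on_mult ce continuous_intros)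
    then show ?thesis unfolding q_def quad_expand .
  qed
  obtain z0 where z0: "z0 \<in> S" "\<forall>z\<in>S. q z0 \<le> q z"
    using continuous_attains_inf[OF cS neS cq] by blast
  define c where "c = q z0"
  have c: "c > 0" unfolding c_def q_def using z0(1) pos[of "fst z0" "snd z0"] by (auto simp: S_def) (metis norm_zero zero_neq_one)
  show ?thesis
  proof (intro exI[of _ c] conjI ballI allI c)
    fix p x assume p: "p \<in> K"
    show "x \<bullet> (M p *v x) \<ge> c * (norm x)^2"
    proof (cases "x = 0")
      case True then show ?thesis by simp
    next
      case False
      define y where "y = (1 / norm x) *\<^sub>R x"
      have "(p, y) \<in> S" using False p by (simp add: S_def y_def)
      then have "c \<le> y \<bullet> (M p *v y)" using z0(2) by (auto simp: c_def q_def)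
      also have "y \<bullet> (M p *v y) = (x \<bullet> (M p *v x)) / (norm x)^2"
        by (simp add: y_def matrix_vector_mult_scaleR power2_eq_square)
      finally show ?thesis using False by (simp add: field_simps)
    qed
  qed
qed

lemma posdef_pos: "posdef M \<Longrightarrow> x \<noteq> 0 \<Longrightarrow> x \<bullet> (M *v x) > 0"
  by (simp add: posdef_def)

lemma coercive_single:
  fixes M :: "real^'n^'n"
  assumes "\<And>x. x \<noteq> 0 \<Longrightarrow> x \<bullet> (M *v x) > 0"
  shows "\<exists>c>0. \<forall>x. x \<bullet> (M *v x) \<ge> c * (norm x)^2"
  using coercive_family[of "{0::real}" "\<lambda>_. M"] assms by auto

lemma pos_inj:
  assumes "\<And>x. x \<noteq> 0 \<Longrightarrow> x \<bullet> ((M::real^'n^'n) *v x) > 0"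
  shows "inj ((*v) M)"
proof (rule injI)
  fix x y assume "M *v x = M *v y"
  then have "M *v (x - y) = 0" by (simp add: matrix_vector_mult_diff_distrib)
  then have "(x - y) \<bullet> (M *v (x - y)) = 0" by simp
  then show "x = y" using assms[of "x - y"] by (cases "x - y = 0") auto
qed

lemma pos_invertible:
  assumes "\<And>x. x \<noteq> 0 \<Longrightarrow> x \<bullet> ((M::real^'n^'n) *v x) > 0"
  shows "M ** matrix_inv M = mat 1" "matrix_inv M ** M = mat 1" "invertible M"
proof -
  obtain B where B: "B ** M = mat 1"
    using pos_inj[OF assms] matrix_left_invertible_injective by blast
  then have "M ** B = mat 1" using matrix_left_right_inverse by blast
  with B have inv: "invertible M" unfolding invertible_def by blast
  then have "M ** matrix_inv M = mat 1 \<and> matrix_inv M ** M = mat 1"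
    unfolding invertible_def matrix_inv_def by (rule someI_ex)
  then show "M ** matrix_inv M = mat 1" "matrix_inv M ** M = mat 1" by auto
  show "invertible M" by (rule inv)
qed

lemma inv_sym:
  assumes "M ** B = mat 1" "B ** M = mat 1" "transpose M = (M::real^'n^'n)"
  shows "transpose B = B"
proof -
  have "transpose B ** M = mat 1"
    by (metis assms(1) assms(3) matrix_transpose_mul transpose_mat)
  then have "transpose B = (transpose B ** M) ** B" using assms(1)
    by (metis matrix_mul_assoc matrix_mul_rid)
  then show ?thesis using \<open>transpose B ** M = mat 1\<close> by (simp add: matrix_mul_lid)
qed

lemma inv_pos:
  assumes "M ** B = mat 1" "B ** M = mat 1" "\<And>x. x \<noteq> 0 \<Longrightarrow> x \<bullet> ((M::real^'n^'n) *v x) > 0"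
    and "transpose M = M"
  shows "x \<noteq> 0 \<Longrightarrow> x \<bullet> (B *v x) > 0"
proof -
  assume x: "x \<noteq> 0"
  define y where "y = B *v x"
  have My: "M *v y = x" unfolding y_def using assms(1) by (simp add: matrix_vector_mul_assoc)
  have "y \<noteq> 0" using My x by auto
  then have "y \<bullet> (M *v y) > 0" using assms(3) by blast
  then show "x \<bullet> (B *v x) > 0" using My by (simp add: y_def inner_commute)
qed

lemma inv_bound:
  assumes "M ** B = mat 1" "c > 0" "\<And>x. x \<bullet> ((M::real^'n^'n) *v x) \<ge> c * (norm x)^2"
  shows "norm (B *v z) \<le> norm z / c"
proof -
  define y where "y = B *v z"
  have My: "M *v y = z" unfolding y_def using assms(1) by (simp add: matrix_vector_mul_assoc)
  have "c * (norm y)^2 \<le> y \<bullet> z" using assms(3)[of y] My by simp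
  also have "\<dots> \<le> norm y * norm z" by (rule norm_cauchy_schwarz)
  finally have "c * (norm y)^2 \<le> norm y * norm z" .
  then have "c * norm y \<le> norm z"
    by (cases "norm y = 0") (auto simp: power2_eq_square)
  then show ?thesis using assms(2) by (simp add: y_def field_simps)
qed

lemma quad_bound:
  "\<bar>x \<bullet> ((N::real^'n^'n) *v x)\<bar> \<le> (\<Sum>i\<in>UNIV. \<Sum>j\<in>UNIV. \<bar>N $ i $ j\<bar>) * (norm x)^2"
proof -
  have "\<bar>x \<bullet> (N *v x)\<bar> \<le> norm x * norm (N *v x)" by (rule Cauchy_Schwarz_ineq2)
  also have "\<dots> \<le> norm x * ((\<Sum>i\<in>UNIV. \<Sum>j\<in>UNIV. \<bar>N $ i $ j\<bar>) * norm x)"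
  proof (intro mult_left_mono)
    have "norm (N *v x) \<le> onorm ((*v) N) * norm x"
      by (rule onorm[OF matrix_vector_mul_bounded_linear])
    also have "\<dots> \<le> (\<Sum>i\<in>UNIV. \<Sum>j\<in>UNIV. \<bar>N $ i $ j\<bar>) * norm x"
      by (intro mult_right_mono onorm_le_matrix_component_sum) auto
    finally show "norm (N *v x) \<le> (\<Sum>i\<in>UNIV. \<Sum>j\<in>UNIV. \<bar>N $ i $ j\<bar>) * norm x" .
  qed simp
  finally show ?thesis by (simp add: power2_eq_square algebra_simps)
qed

lemma mat_ge_iff: "mat_ge A (\<epsilon> *\<^sub>R mat 1) \<longleftrightarrow> (\<forall>x. x \<bullet> (A *v x) \<ge> \<epsilon> * (norm x)^2)"
  unfolding mat_ge_def
  by (simp add: scaleR_matrix_vector_assoc[symmetric] power2_norm_eq_inner)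

lemma eps_bound:
  assumes "\<epsilon> > 0" "\<forall>x. x \<bullet> (A *v x) \<ge> \<epsilon> * (norm x)^2"
  shows "2 * (v \<bullet> e) - v \<bullet> (A *v v) \<le> (norm e)^2 / \<epsilon>"
proof -
  have "0 \<le> (norm (\<epsilon> *\<^sub>R v - e))^2" by simp
  also have "\<dots> = (\<epsilon> *\<^sub>R v - e) \<bullet> (\<epsilon> *\<^sub>R v - e)" by (simp only: power2_norm_eq_inner)
  also have "\<dots> = \<epsilon>^2 * (v \<bullet> v) - 2 * \<epsilon> * (v \<bullet> e) + (e \<bullet> e)"
    by (simp add: inner_diff_left inner_diff_right inner_commute power2_eq_square algebra_simps)
  also have "\<dots> = \<epsilon>^2 * (norm v)^2 - 2 * \<epsilon> * (v \<bullet> e) + (norm e)^2"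
    by (simp add: power2_norm_eq_inner)
  finally have "2 * \<epsilon> * (v \<bullet> e) \<le> \<epsilon> * (\<epsilon> * (norm v)^2) + (norm e)^2"
    by (simp add: power2_eq_square algebra_simps)
  also have "\<dots> \<le> \<epsilon> * (v \<bullet> (A *v v)) + (norm e)^2"
    using assms by (intro add_right_mono mult_left_mono) auto
  finally have "\<epsilon> * (2 * (v \<bullet> e) - v \<bullet> (A *v v)) \<le> (norm e)^2" by (simp add: algebra_simps)
  then show ?thesis using assms(1) by (simp add: field_simps)
qed

definition Emat :: "'n::finite \<Rightarrow> 'n \<Rightarrow> real^'n^'n" where "Emat i j = axis i (axis j 1)"

lemma mat_expand: "(H::real^'n^'n) = (\<Sum>i\<in>UNIV. \<Sum>j\<in>UNIV. H$i$j *\<^sub>R Emat i j)"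
proof -
  have e: "Emat i j $ k $ l = (if k = i then (if l = j then 1 else 0) else 0)" for i j k l
    by (simp add: Emat_def axis_def)
  have "(\<Sum>i\<in>UNIV. \<Sum>j\<in>UNIV. H$i$j *\<^sub>R Emat i j) $ k $ l = H $ k $ l" for k l
  proof -
    have "(\<Sum>i\<in>UNIV. \<Sum>j\<in>UNIV. H$i$j *\<^sub>R Emat i j) $ k $ l
       = (\<Sum>i\<in>UNIV. \<Sum>j\<in>UNIV. H$i$j * (if k = i then (if l = j then 1 else 0) else 0))"
      by (simp add: e)
    also have "\<dots> = (\<Sum>i\<in>UNIV. if k = i then H$i$l else 0)"
    proof (intro sum.cong refl)
      fix i
      have "(\<Sum>j\<in>UNIV. H$i$j * (if k = i then (if l = j then 1 else 0) else 0))
          = (\<Sum>j\<in>UNIV. if l = j then (if k = i then H$i$j else 0) else 0)"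
        by (intro sum.cong refl) auto
      also have "\<dots> = (if k = i then H$i$l else 0)" by (simp add: sum.delta sum.delta')
      finally show "(\<Sum>j\<in>UNIV. H$i$j * (if k = i then (if l = j then 1 else 0) else 0)) = (if k = i then H$i$l else 0)" .
    qed
    also have "\<dots> = H $ k $ l" by (simp add: sum.delta sum.delta')
    finally show ?thesis .
  qed
  then show ?thesis by (simp add: vec_eq_iff)
qed

lemma Ck_Suc_hasderiv:
  assumes "Ck_on (Suc k) g S" "open S" "X \<in> S"
  shows "(g has_derivative (\<lambda>v. dd v g X)) (at X)"
proof -
  have "g differentiable_on S" using assms(1) by simp
  then have "g differentiable (at X)" using assms(2,3) by (simp add: differentiable_on_eq_differentiable_at)
  then show ?thesis using frechet_derivative_works unfolding dd_def by blast
qed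

lemma Ck_Suc_linear:
  assumes "Ck_on (Suc k) g S" "open S" "X \<in> S"
  shows "linear (\<lambda>v. dd v g X)"
  using Ck_Suc_hasderiv[OF assms] has_derivative_linear by blast

lemma Ck_SS_dd:
  assumes "Ck_on (Suc k) g S" shows "Ck_on k (dd v g) S"
  using assms unfolding dd_def by simp

lemma dd_mat_expand:
  assumes "Ck_on (Suc k) g S" "open S" "X \<in> S"
  shows "dd H g X = (\<Sum>i\<in>UNIV. \<Sum>j\<in>UNIV. H$i$j * dd (Emat i j) g X)"
proof -
  have lin: "linear (\<lambda>v. dd v g X)" by (rule Ck_Suc_linear[OF assms])
  have "dd H g X = dd (\<Sum>i\<in>UNIV. \<Sum>j\<in>UNIV. H$i$j *\<^sub>R Emat i j) g X"
    using mat_expand[of H] by simp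
  also have "\<dots> = (\<Sum>i\<in>UNIV. \<Sum>j\<in>UNIV. H$i$j * dd (Emat i j) g X)"
    by (simp add: linear_sum[OF lin] linear_scale[OF lin])
  finally show ?thesis .
qed

lemma vd_entries:
  assumes "\<And>i j. ((\<lambda>s. \<gamma> s $ i $ j) has_real_derivative \<gamma>' $ i $ j) (at s)"
  shows "(\<gamma> has_vector_derivative (\<gamma>'::real^'n^'n)) (at s)"
proof -
  have "((\<lambda>s. \<Sum>i\<in>UNIV. \<Sum>j\<in>UNIV. \<gamma> s $i$j *\<^sub>R Emat i j) has_derivative
         (\<lambda>h. \<Sum>i\<in>UNIV. \<Sum>j\<in>UNIV. (\<gamma>' $i$j * h) *\<^sub>R Emat i j)) (at s)"
    using assms by (intro has_derivative_sum has_derivative_scaleR_left) (simp add: has_field_derivative_def)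
  moreover have "(\<lambda>s. \<Sum>i\<in>UNIV. \<Sum>j\<in>UNIV. \<gamma> s $i$j *\<^sub>R Emat i j) = \<gamma>"
    using mat_expand by (rule ext[symmetric])
  moreover have "(\<lambda>h. \<Sum>i\<in>UNIV. \<Sum>j\<in>UNIV. (\<gamma>' $i$j * h) *\<^sub>R Emat i j) = (\<lambda>h. h *\<^sub>R \<gamma>')"
  proof
    fix h
    have "(\<Sum>i\<in>UNIV. \<Sum>j\<in>UNIV. (\<gamma>' $i$j * h) *\<^sub>R Emat i j) = h *\<^sub>R (\<Sum>i\<in>UNIV. \<Sum>j\<in>UNIV. \<gamma>' $i$j *\<^sub>R Emat i j)"
      by (simp add: scaleR_sum_right mult.commute)
    then show "(\<Sum>i\<in>UNIV. \<Sum>j\<in>UNIV. (\<gamma>' $i$j * h) *\<^sub>R Emat i j) = h *\<^sub>R \<gamma>'"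
      using mat_expand[of \<gamma>'] by simp
  qed
  ultimately show ?thesis by (simp add: has_vector_derivative_def)
qed

lemma chain1:
  assumes "Ck_on (Suc k) g S" "open S" "\<gamma> s \<in> S" "(\<gamma> has_vector_derivative \<gamma>') (at s)"
  shows "((\<lambda>s. g (\<gamma> s)) has_real_derivative dd \<gamma>' g (\<gamma> s)) (at s)"
proof -
  have d: "(g has_derivative (\<lambda>v. dd v g (\<gamma> s))) (at (\<gamma> s))" by (rule Ck_Suc_hasderiv[OF assms(1-3)])
  have lin: "linear (\<lambda>v. dd v g (\<gamma> s))" by (rule Ck_Suc_linear[OF assms(1-3)])
  from has_derivative_compose[OF assms(4)[unfolded has_vector_derivative_def] d]
  have "((\<lambda>s. g (\<gamma> s)) has_derivative (\<lambda>h. dd (h *\<^sub>R \<gamma>') g (\<gamma> s))) (at s)" by (simp add: o_def)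
  moreover have "(\<lambda>h. dd (h *\<^sub>R \<gamma>') g (\<gamma> s)) = (\<lambda>h. dd \<gamma>' g (\<gamma> s) * h)"
    using linear_scale[OF lin] by (auto simp: mult.commute)
  ultimately show ?thesis by (simp add: has_field_derivative_def)
qed

definition F2 :: "(real^'n^'n \<Rightarrow> real) \<Rightarrow> real^'n^'n \<Rightarrow> real^'n^'n \<Rightarrow> real" where
  "F2 \<Phi> X H = (\<Sum>i\<in>UNIV. \<Sum>j\<in>UNIV. H$i$j * dd H (dd (Emat i j) \<Phi>) X)"

lemma chain2:
  fixes \<Phi> :: "real^'n^'n \<Rightarrow> real"
  assumes C2: "Ck_on (Suc (Suc 0)) \<Phi> S" and S: "open S" and d: "d > 0"
    and inS: "\<And>s. \<bar>s\<bar> < d \<Longrightarrow> \<gamma> s \<in> S"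
    and g1: "\<And>s. \<bar>s\<bar> < d \<Longrightarrow> (\<gamma> has_vector_derivative \<gamma>1 s) (at s)"
    and g2: "\<And>i j. ((\<lambda>s. \<gamma>1 s $ i $ j) has_real_derivative \<gamma>2 $ i $ j) (at 0)"
  shows "\<And>s. \<bar>s\<bar> < d \<Longrightarrow> ((\<lambda>s. \<Phi> (\<gamma> s)) has_real_derivative dd (\<gamma>1 s) \<Phi> (\<gamma> s)) (at s)"
    and "((\<lambda>s. dd (\<gamma>1 s) \<Phi> (\<gamma> s)) has_real_derivative (dd \<gamma>2 \<Phi> (\<gamma> 0) + F2 \<Phi> (\<gamma> 0) (\<gamma>1 0))) (at 0)"
proof -
  show "\<And>s. \<bar>s\<bar> < d \<Longrightarrow> ((\<lambda>s. \<Phi> (\<gamma> s)) has_real_derivative dd (\<gamma>1 s) \<Phi> (\<gamma> s)) (at s)"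
    using chain1[OF C2 S inS g1] by blast
  have C1: "Ck_on (Suc 0) (dd (Emat i j) \<Phi>) S" for i j using Ck_SS_dd[OF C2] .
  have in0: "\<gamma> 0 \<in> S" using inS d by simp
  have g10: "(\<gamma> has_vector_derivative \<gamma>1 0) (at 0)" using g1 d by simp
  define G where "G s = (\<Sum>i\<in>UNIV. \<Sum>j\<in>UNIV. \<gamma>1 s $i$j * dd (Emat i j) \<Phi> (\<gamma> s))" for s
  have "(G has_real_derivative (\<Sum>i\<in>UNIV. \<Sum>j\<in>UNIV.
      \<gamma>2 $i$j * dd (Emat i j) \<Phi> (\<gamma> 0) + \<gamma>1 0 $i$j * dd (\<gamma>1 0) (dd (Emat i j) \<Phi>) (\<gamma> 0))) (at 0)"
    unfolding G_def
  proof (intro DERIV_sum)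
    fix i j
    show "((\<lambda>s. \<gamma>1 s $ i $ j * dd (Emat i j) \<Phi> (\<gamma> s)) has_real_derivative
            \<gamma>2 $ i $ j * dd (Emat i j) \<Phi> (\<gamma> 0) +
            \<gamma>1 0 $ i $ j * dd (\<gamma>1 0) (dd (Emat i j) \<Phi>) (\<gamma> 0)) (at 0)"
      using DERIV_mult[OF g2[of i j] chain1[OF C1[of i j] S in0 g10]] by (simp add: ac_simps)
  qed
  also have "(\<Sum>i\<in>UNIV. \<Sum>j\<in>UNIV.
      \<gamma>2 $i$j * dd (Emat i j) \<Phi> (\<gamma> 0) + \<gamma>1 0 $i$j * dd (\<gamma>1 0) (dd (Emat i j) \<Phi>) (\<gamma> 0))
      = dd \<gamma>2 \<Phi> (\<gamma> 0) + F2 \<Phi> (\<gamma> 0) (\<gamma>1 0)"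
    by (simp add: sum.distrib F2_def dd_mat_expand[OF C2 S in0, of \<gamma>2])
  finally have DG: "(G has_real_derivative dd \<gamma>2 \<Phi> (\<gamma> 0) + F2 \<Phi> (\<gamma> 0) (\<gamma>1 0)) (at 0)" .
  show "((\<lambda>s. dd (\<gamma>1 s) \<Phi> (\<gamma> s)) has_real_derivative (dd \<gamma>2 \<Phi> (\<gamma> 0) + F2 \<Phi> (\<gamma> 0) (\<gamma>1 0))) (at 0)"
  proof (rule has_field_derivative_transform_within_open[OF DG, of "ball 0 d"])
    show "open (ball (0::real) d)" by simp
    show "0 \<in> ball (0::real) d" using d by simp
    fix s :: real assume "s \<in> ball 0 d"
    then have "\<bar>s\<bar> < d" by simp
    then show "G s = dd (\<gamma>1 s) \<Phi> (\<gamma> s)"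
      unfolding G_def using dd_mat_expand[OF C2 S inS] by simp
  qed
qed

lemma F2_neg:
  assumes C2: "Ck_on (Suc (Suc 0)) \<Phi> S" and S: "open S" and X: "X \<in> S"
  shows "F2 \<Phi> X (- H) = F2 \<Phi> X H"
proof -
  have "dd (- H) (dd (Emat i j) \<Phi>) X = - dd H (dd (Emat i j) \<Phi>) X" for i j
    using linear_neg[OF Ck_Suc_linear[OF Ck_SS_dd[OF C2] S X]] by simp
  then show ?thesis by (simp add: F2_def)
qed

lemma second_deriv_max:
  fixes \<phi> :: "real \<Rightarrow> real"
  assumes d: "d > 0" and d1: "\<And>s. \<bar>s\<bar> < d \<Longrightarrow> DERIV \<phi> s :> \<phi>' s"
    and d2: "DERIV \<phi>' 0 :> L" and mx: "\<And>s. \<bar>s\<bar> < d \<Longrightarrow> \<phi> s \<le> \<phi> 0"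
  shows "L \<le> 0"
proof (rule ccontr)
  assume "\<not> L \<le> 0" then have L: "L > 0" by simp
  have "\<phi>' 0 = 0"
    using DERIV_local_max[OF d1[of 0] d] d mx by (simp add: abs_minus_commute)
  obtain d' where d': "d' > 0" "\<And>h. h > 0 \<Longrightarrow> h < d' \<Longrightarrow> \<phi>' 0 < \<phi>' (0 + h)"
    using DERIV_pos_inc_right[OF d2 L] by blast
  define h where "h = min d d' / 2"
  have h: "h > 0" "h < d" "h < d'" using d d'(1) by (auto simp: h_def)
  obtain z where z: "0 < z" "z < h" "\<phi> h - \<phi> 0 = (h - 0) * \<phi>' z"
    using MVT2[OF h(1), of \<phi> \<phi>'] d1 h by (smt (verit))
  have "\<phi>' z > 0" using d'(2)[of z] z h \<open>\<phi>' 0 = 0\<close> by simp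
  then have "\<phi> h > \<phi> 0" using z h by (simp add: algebra_simps mult_pos_pos)
  moreover have "\<phi> h \<le> \<phi> 0" using mx h by simp
  ultimately show False by simp
qed

lemma concave_2nd:
  fixes \<phi> :: "real \<Rightarrow> real"
  assumes d: "d > 0" and d1: "\<And>s. \<bar>s\<bar> < d \<Longrightarrow> DERIV \<phi> s :> \<phi>' s"
    and d2: "DERIV \<phi>' 0 :> L" and mid: "\<And>r. \<bar>r\<bar> < d \<Longrightarrow> \<phi> r + \<phi> (- r) \<le> 2 * \<phi> 0"
  shows "L \<le> 0"
proof -
  define \<psi> where "\<psi> r = \<phi> r + \<phi> (- r) - 2 * \<phi> 0" for r
  have "DERIV \<psi> s :> \<phi>' s - \<phi>' (- s)" if "\<bar>s\<bar> < d" for s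
  proof -
    have a: "DERIV \<phi> s :> \<phi>' s" using d1 that by simp
    have b: "DERIV \<phi> (- s) :> \<phi>' (- s)" using d1 that by simp
    have c: "DERIV (\<lambda>r. \<phi> (- r)) s :> \<phi>' (- s) * (- 1)"
      using DERIV_chain2[OF b DERIV_minus[OF DERIV_ident]] by simp
    have "DERIV \<psi> s :> \<phi>' s + \<phi>' (- s) * (- 1) - 0"
      unfolding \<psi>_def by (intro DERIV_diff DERIV_add a c DERIV_const)
    then show ?thesis by simp
  qed
  moreover have "DERIV (\<lambda>s. \<phi>' s - \<phi>' (- s)) 0 :> L + L"
  proof -
    have c: "DERIV (\<lambda>r. \<phi>' (- r)) 0 :> L * (- 1)"
      using DERIV_chain2[OF _ DERIV_minus[OF DERIV_ident], of \<phi>' L 0] d2 by simp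
    show ?thesis using DERIV_diff[OF d2 c] by simp
  qed
  moreover have "\<psi> s \<le> \<psi> 0" if "\<bar>s\<bar> < d" for s using mid[OF that] by (simp add: \<psi>_def)
  ultimately have "L + L \<le> 0" by (intro second_deriv_max[OF d, of \<psi>]) auto
  then show ?thesis by simp
qed

lemma left_deriv_max:
  fixes g :: "real \<Rightarrow> real"
  assumes "DERIV g t :> l" "d > 0" "\<And>h. 0 < h \<Longrightarrow> h < d \<Longrightarrow> g (t - h) \<le> g t"
  shows "l \<ge> 0"
proof (rule ccontr)
  assume "\<not> l \<ge> 0"
  then obtain d' where d': "d' > 0" "\<And>h. h > 0 \<Longrightarrow> h < d' \<Longrightarrow> g t < g (t - h)"
    using DERIV_neg_dec_left[OF assms(1)] by force
  define h where "h = min d d' / 2"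
  have "g t < g (t - h)" using d' assms(2) by (intro d'(2)) (auto simp: h_def)
  moreover have "g (t - h) \<le> g t" using assms(2) d'(1) by (intro assms(3)) (auto simp: h_def)
  ultimately show False by simp
qed

definition mderiv :: "(real \<Rightarrow> real^'n^'m) \<Rightarrow> real^'n^'m \<Rightarrow> real \<Rightarrow> bool" where
  "mderiv X X' r \<longleftrightarrow> (\<forall>i j. ((\<lambda>s. X s $ i $ j) has_real_derivative X' $ i $ j) (at r))"

lemma mderiv_mult:
  assumes "mderiv X X' r" "mderiv Y Y' r"
  shows "mderiv (\<lambda>s. X s ** Y s) (X' ** Y r + X r ** Y') r"
  unfolding mderiv_def
proof (intro allI)
  fix i j
  have "((\<lambda>s. \<Sum>k\<in>UNIV. X s $ i $ k * Y s $ k $ j) has_real_derivative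
      (\<Sum>k\<in>UNIV. X' $ i $ k * Y r $ k $ j + X r $ i $ k * Y' $ k $ j)) (at r)"
  proof (intro DERIV_sum)
    fix k
    have a: "((\<lambda>s. X s $ i $ k) has_real_derivative X' $ i $ k) (at r)" using assms(1) unfolding mderiv_def by blast
    have b: "((\<lambda>s. Y s $ k $ j) has_real_derivative Y' $ k $ j) (at r)" using assms(2) unfolding mderiv_def by blast
    show "((\<lambda>s. X s $ i $ k * Y s $ k $ j) has_real_derivative X' $ i $ k * Y r $ k $ j + X r $ i $ k * Y' $ k $ j) (at r)"
      using DERIV_mult[OF a b] by (simp add: ac_simps)
  qed
  then show "((\<lambda>s. (X s ** Y s) $ i $ j) has_real_derivative (X' ** Y r + X r ** Y') $ i $ j) (at r)"
    by (simp add: matrix_matrix_mult_def sum.distrib)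
qed

lemma mderiv_const: "mderiv (\<lambda>s. M) 0 r"
  unfolding mderiv_def by simp

lemma mderiv_neg: "mderiv X X' r \<Longrightarrow> mderiv (\<lambda>s. - X s) (- X') r"
  unfolding mderiv_def by (auto intro: DERIV_minus)

lemma mderiv_vd: "mderiv X X' r \<Longrightarrow> (X has_vector_derivative (X'::real^'n^'n)) (at r)"
  unfolding mderiv_def by (rule vd_entries) blast

lemma sym_iff: "transpose X = X \<longleftrightarrow> (\<forall>i j. X$i$j = X$j$i)"
  by (auto simp: transpose_def vec_eq_iff)

lemma mat_mv_axis: "(A *v axis j 1) $ i = A $ i $ j"
  by (simp add: matrix_vector_mult_def axis_def if_distrib cong: if_cong)

lemma matrix_sub_ldistrib: "(A::real^'n^'m) ** (B - C) = A ** B - A ** C"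
  by (vector matrix_matrix_mult_def sum_subtractf right_diff_distrib)
lemma matrix_sub_rdistrib: "((B::real^'n^'m) - C) ** A = B ** A - C ** A"
  by (vector matrix_matrix_mult_def sum_subtractf left_diff_distrib)

lemma inv_curve:
  fixes B \<eta> :: "real^'n^'n"
  assumes Bsym: "transpose B = B" and Bpos: "\<And>x. x \<noteq> 0 \<Longrightarrow> x \<bullet> (B *v x) > 0"
    and \<eta>sym: "transpose \<eta> = \<eta>"
  shows "\<exists>d>0. \<forall>r. \<bar>r\<bar> < d \<longrightarrow>
     posdef (B + r *\<^sub>R \<eta>) \<and>
     (B + r *\<^sub>R \<eta>) ** matrix_inv (B + r *\<^sub>R \<eta>) = mat 1 \<and>
     matrix_inv (B + r *\<^sub>R \<eta>) ** (B + r *\<^sub>R \<eta>) = mat 1 \<and>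
     transpose (matrix_inv (B + r *\<^sub>R \<eta>)) = matrix_inv (B + r *\<^sub>R \<eta>) \<and>
     (\<forall>x. x \<noteq> 0 \<longrightarrow> x \<bullet> (matrix_inv (B + r *\<^sub>R \<eta>) *v x) > 0) \<and>
     mderiv (\<lambda>s. matrix_inv (B + s *\<^sub>R \<eta>))
        (- (matrix_inv (B + r *\<^sub>R \<eta>) ** \<eta> ** matrix_inv (B + r *\<^sub>R \<eta>))) r"
proof -
  define C where "C r = B + r *\<^sub>R \<eta>" for r
  define \<gamma> where "\<gamma> r = matrix_inv (C r)" for r
  obtain c where c: "c > 0" "\<And>x. x \<bullet> (B *v x) \<ge> c * (norm x)^2"
    using coercive_single[of B] Bpos by blast
  define K where "K = (\<Sum>i\<in>UNIV. \<Sum>j\<in>UNIV. \<bar>\<eta> $ i $ j\<bar>)"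
  have K0: "K \<ge> 0" unfolding K_def by (intro sum_nonneg) auto
  have Kq: "\<bar>x \<bullet> (\<eta> *v x)\<bar> \<le> K * (norm x)^2" for x unfolding K_def by (rule quad_bound)
  have Kn: "norm (\<eta> *v x) \<le> K * norm x" for x
  proof -
    have "norm (\<eta> *v x) \<le> onorm ((*v) \<eta>) * norm x"
      by (rule onorm[OF matrix_vector_mul_bounded_linear])
    also have "\<dots> \<le> K * norm x" unfolding K_def
      by (intro mult_right_mono onorm_le_matrix_component_sum) auto
    finally show ?thesis .
  qed
  define Kp where "Kp = K + 1"
  have Kp: "Kp > 0" using K0 by (simp add: Kp_def)
  define d where "d = c / (2 * Kp)"
  have d: "d > 0" using c Kp by (simp add: d_def)
  have dK: "d * K \<le> c / 2"
  proof -
    have "d * K \<le> d * Kp" using d by (simp add: Kp_def)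
    also have "\<dots> = c / 2" using Kp by (simp add: d_def)
    finally show ?thesis .
  qed
  have Csym: "transpose (C r) = C r" for r
    using Bsym \<eta>sym by (simp add: sym_iff C_def)
  have Ccoer: "x \<bullet> (C r *v x) \<ge> (c/2) * (norm x)^2" if "\<bar>r\<bar> < d" for r x
  proof -
    have "x \<bullet> (C r *v x) = x \<bullet> (B *v x) + r * (x \<bullet> (\<eta> *v x))"
      by (simp add: C_def matrix_vector_mult_add_rdistrib scaleR_matrix_vector_assoc[symmetric] inner_add_right)
    moreover have "r * (x \<bullet> (\<eta> *v x)) \<ge> - (d * K * (norm x)^2)"
    proof -
      have "\<bar>r * (x \<bullet> (\<eta> *v x))\<bar> \<le> \<bar>r\<bar> * (K * (norm x)^2)"
        using Kq[of x] by (simp add: abs_mult mult_left_mono)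
      also have "\<dots> \<le> d * (K * (norm x)^2)"
        using that K0 by (intro mult_right_mono) auto
      finally show ?thesis by (simp add: algebra_simps)
    qed
    moreover have "(d * K) * (norm x)^2 \<le> (c/2) * (norm x)^2" by (rule mult_right_mono[OF dK]) simp
    moreover have "c * (norm x)^2 - (c/2) * (norm x)^2 = (c/2) * (norm x)^2" by simp
    ultimately show ?thesis using c(2)[of x] by linarith
  qed
  have Cpos: "x \<bullet> (C r *v x) > 0" if "\<bar>r\<bar> < d" "x \<noteq> 0" for r x
  proof -
    have "(norm x)^2 > 0" using that(2) by simp
    then have "(c/2) * (norm x)^2 > 0" using c by simp
    then show ?thesis using Ccoer[OF that(1), of x] by linarith
  qed
  have Cinv: "C r ** \<gamma> r = mat 1" "\<gamma> r ** C r = mat 1" if "\<bar>r\<bar> < d" for r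
    using pos_invertible[of "C r"] Cpos[OF that] unfolding \<gamma>_def by auto
  have bnd: "norm (\<gamma> r *v z) \<le> norm z / (c/2)" if "\<bar>r\<bar> < d" for r z
    using inv_bound[OF Cinv(1)[OF that], of "c/2"] c Ccoer[OF that] by auto
  have diff: "\<gamma> y - \<gamma> r = (r - y) *\<^sub>R (\<gamma> y ** \<eta> ** \<gamma> r)" if "\<bar>r\<bar> < d" "\<bar>y\<bar> < d" for r y
  proof -
    have "\<gamma> y ** C r ** \<gamma> r = \<gamma> y" using Cinv[OF that(1)] by (simp add: matrix_mul_assoc[symmetric])
    moreover have "\<gamma> y ** C y ** \<gamma> r = \<gamma> r" using Cinv[OF that(2)] by simp
    ultimately have "\<gamma> y - \<gamma> r = \<gamma> y ** (C r - C y) ** \<gamma> r"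
      by (simp add: matrix_sub_ldistrib matrix_sub_rdistrib)
    also have "C r - C y = (r - y) *\<^sub>R \<eta>" by (simp add: C_def algebra_simps)
    finally show ?thesis
      by (simp add: matrix_scalar_ac scalar_matrix_assoc[symmetric])
  qed
  have cont: "isCont (\<lambda>y. \<gamma> y $ i $ j) r" if r: "\<bar>r\<bar> < d" for r i j
  proof -
    define z :: "real^'n" where "z = axis j 1"
    define L where "L = (2/c) * K * (norm z / (c/2))"
    have L0: "L \<ge> 0" using c K0 by (simp add: L_def)
    have lip: "norm (\<gamma> y *v z - \<gamma> r *v z) \<le> \<bar>y - r\<bar> * L" if y: "\<bar>y\<bar> < d" for y
    proof -
      have "\<gamma> y *v z - \<gamma> r *v z = (\<gamma> y - \<gamma> r) *v z"
        by (rule matrix_vector_mult_diff_rdistrib[symmetric])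
      also have "\<dots> = ((r - y) *\<^sub>R (\<gamma> y ** \<eta> ** \<gamma> r)) *v z" using diff[OF r y] by simp
      also have "\<dots> = (r - y) *\<^sub>R ((\<gamma> y ** \<eta> ** \<gamma> r) *v z)"
        by (rule scaleR_matrix_vector_assoc[symmetric])
      also have "(\<gamma> y ** \<eta> ** \<gamma> r) *v z = \<gamma> y *v (\<eta> *v (\<gamma> r *v z))"
        by (simp only: matrix_vector_mul_assoc[symmetric])
      finally have "\<gamma> y *v z - \<gamma> r *v z = (r - y) *\<^sub>R (\<gamma> y *v (\<eta> *v (\<gamma> r *v z)))" .
      then have "norm (\<gamma> y *v z - \<gamma> r *v z) = \<bar>y - r\<bar> * norm (\<gamma> y *v (\<eta> *v (\<gamma> r *v z)))"
        by (simp add: abs_minus_commute)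
      also have "\<dots> \<le> \<bar>y - r\<bar> * L"
      proof (intro mult_left_mono)
        have "norm (\<gamma> y *v (\<eta> *v (\<gamma> r *v z))) \<le> norm (\<eta> *v (\<gamma> r *v z)) / (c/2)" by (rule bnd[OF y])
        also have "\<dots> \<le> K * norm (\<gamma> r *v z) / (c/2)" using c by (intro divide_right_mono Kn) auto
        also have "\<dots> \<le> K * (norm z / (c/2)) / (c/2)"
          using c K0 by (intro divide_right_mono mult_left_mono bnd[OF r]) auto
        also have "\<dots> = L" by (simp add: L_def field_simps)
        finally show "norm (\<gamma> y *v (\<eta> *v (\<gamma> r *v z))) \<le> L" .
      qed simp
      finally show ?thesis .
    qed
    show ?thesis unfolding continuous_at_eps_delta
    proof (intro allI impI)
      fix e :: real assume e: "e > 0"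
      define \<delta> where "\<delta> = min (d - \<bar>r\<bar>) (e / (L + 1))"
      have \<delta>: "\<delta> > 0" using r e L0 by (simp add: \<delta>_def)
      show "\<exists>\<delta>>0. \<forall>y. dist y r < \<delta> \<longrightarrow> dist (\<gamma> y $ i $ j) (\<gamma> r $ i $ j) < e"
      proof (intro exI[of _ \<delta>] conjI allI impI \<delta>)
        fix y assume y: "dist y r < \<delta>"
        then have yd: "\<bar>y\<bar> < d" using r by (simp add: \<delta>_def dist_real_def) linarith
        have "dist (\<gamma> y $ i $ j) (\<gamma> r $ i $ j) = \<bar>(\<gamma> y *v z - \<gamma> r *v z) $ i\<bar>"
          by (simp add: z_def mat_mv_axis dist_real_def)
        also have "\<dots> \<le> norm (\<gamma> y *v z - \<gamma> r *v z)" by (rule component_le_norm_cart)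
        also have "\<dots> \<le> \<bar>y - r\<bar> * L" by (rule lip[OF yd])
        also have "\<dots> \<le> \<delta> * L" using y L0 by (intro mult_right_mono) (auto simp: dist_real_def)
        also have "\<dots> < e"
        proof -
          have "\<delta> * L \<le> (e / (L + 1)) * L" using L0 by (intro mult_right_mono) (auto simp: \<delta>_def)
          also have "\<dots> < e" using e L0 by (simp add: field_simps)
          finally show ?thesis .
        qed
        finally show "dist (\<gamma> y $ i $ j) (\<gamma> r $ i $ j) < e" .
      qed
    qed
  qed
  have der: "mderiv \<gamma> (- (\<gamma> r ** \<eta> ** \<gamma> r)) r" if r: "\<bar>r\<bar> < d" for r
    unfolding mderiv_def
  proof (intro allI)
    fix i j
    define M where "M = \<eta> ** \<gamma> r"
    have "isCont (\<lambda>y. - (\<Sum>k\<in>UNIV. \<gamma> y $ i $ k * M $ k $ j)) r"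
      by (intro continuous_intros cont[OF r])
    then have "isCont (\<lambda>y. (- (\<gamma> y ** M)) $ i $ j) r"
      by (simp add: matrix_matrix_mult_def)
    then have lim: "((\<lambda>y. (- (\<gamma> y ** M)) $ i $ j) \<longlongrightarrow> (- (\<gamma> r ** M)) $ i $ j) (at r)"
      by (simp add: isCont_def)
    have "((\<lambda>y. (\<gamma> y $ i $ j - \<gamma> r $ i $ j) / (y - r)) \<longlongrightarrow> (- (\<gamma> r ** M)) $ i $ j) (at r)"
    proof (rule Lim_transform_within_open[OF lim, of "ball 0 d"])
      show "open (ball (0::real) d)" by simp
      show "r \<in> ball 0 d" using r by simp
      fix y assume y: "y \<in> ball 0 d" "y \<noteq> r"
      then have yd: "\<bar>y\<bar> < d" by simp
      have "\<gamma> y - \<gamma> r = (r - y) *\<^sub>R (\<gamma> y ** M)"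
        using diff[OF r yd] unfolding M_def by (simp only: matrix_mul_assoc)
      then have "\<gamma> y $ i $ j - \<gamma> r $ i $ j = (r - y) * (\<gamma> y ** M) $ i $ j"
      proof -
        assume e: "\<gamma> y - \<gamma> r = (r - y) *\<^sub>R (\<gamma> y ** M)"
        have "(\<gamma> y - \<gamma> r) $ i $ j = ((r - y) *\<^sub>R (\<gamma> y ** M)) $ i $ j" by (simp only: e)
        then show ?thesis by simp
      qed
      moreover have "(r - y) * (\<gamma> y ** M) $ i $ j = - ((y - r) * (\<gamma> y ** M) $ i $ j)"
        by (metis minus_diff_eq mult_minus_left)
      moreover have "y - r \<noteq> 0" using y(2) by simp
      ultimately show "(- (\<gamma> y ** M)) $ i $ j = (\<gamma> y $ i $ j - \<gamma> r $ i $ j) / (y - r)"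
        by simp
    qed
    then show "((\<lambda>s. \<gamma> s $ i $ j) has_real_derivative (- (\<gamma> r ** \<eta> ** \<gamma> r)) $ i $ j) (at r)"
      by (simp only: M_def matrix_mul_assoc has_field_derivative_iff)
  qed
  show ?thesis
  proof (intro exI[of _ d] conjI allI impI d)
    fix r :: real assume r: "\<bar>r\<bar> < d"
    show "posdef (B + r *\<^sub>R \<eta>)" unfolding posdef_def using Csym Cpos[OF r] by (simp add: C_def)
    show "(B + r *\<^sub>R \<eta>) ** matrix_inv (B + r *\<^sub>R \<eta>) = mat 1" using Cinv[OF r] by (simp add: C_def \<gamma>_def)
    show "matrix_inv (B + r *\<^sub>R \<eta>) ** (B + r *\<^sub>R \<eta>) = mat 1" using Cinv[OF r] by (simp add: C_def \<gamma>_def)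
    show "transpose (matrix_inv (B + r *\<^sub>R \<eta>)) = matrix_inv (B + r *\<^sub>R \<eta>)"
      using inv_sym[OF Cinv[OF r] Csym] by (simp add: C_def \<gamma>_def)
    show "\<And>x. x \<noteq> 0 \<Longrightarrow> x \<bullet> (matrix_inv (B + r *\<^sub>R \<eta>) *v x) > 0"
      using inv_pos[OF Cinv[OF r] Cpos[OF r] Csym] by (simp add: C_def \<gamma>_def)
    show "mderiv (\<lambda>s. matrix_inv (B + s *\<^sub>R \<eta>))
        (- (matrix_inv (B + r *\<^sub>R \<eta>) ** \<eta> ** matrix_inv (B + r *\<^sub>R \<eta>))) r"
    proof -
      have "\<gamma> = (\<lambda>s. matrix_inv (B + s *\<^sub>R \<eta>))" by (simp add: fun_eq_iff \<gamma>_def C_def)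
      then show ?thesis using der[OF r] by (simp add: C_def \<gamma>_def)
    qed
  qed
qed

lemma sym_part_id: "transpose X = X \<Longrightarrow> sym_part X = X"
proof -
  assume "transpose X = X"
  then have "sym_part X = (1/2) *\<^sub>R (2 *\<^sub>R X)" by (simp add: sym_part_def scaleR_2)
  then show ?thesis by simp
qed

lemma sym_part_sym: "transpose (sym_part X) = sym_part X"
  unfolding sym_iff by (simp add: sym_part_def transpose_def add.commute)


lemma quad_sym_part: "x \<bullet> (sym_part X *v x) = x \<bullet> ((X::real^'n^'n) *v x)"
proof -
  have "x \<bullet> (sym_part X *v x) = (1/2) * (x \<bullet> (X *v x) + x \<bullet> (transpose X *v x))"
    by (simp add: sym_part_def scaleR_matrix_vector_assoc[symmetric] matrix_vector_mult_add_rdistrib inner_add_right)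
  then show ?thesis using dot_lmul_matrix[of x X x] by (simp add: inner_commute)
qed

lemma S_open: "open {A::real^'n^'n. posdef (sym_part A)}"
  unfolding open_contains_ball
proof
  fix A :: "real^'n^'n" assume "A \<in> {A. posdef (sym_part A)}"
  then have pA: "x \<noteq> 0 \<Longrightarrow> x \<bullet> (A *v x) > 0" for x
    by (simp add: posdef_def quad_sym_part)
  obtain c where c: "c > 0" "\<And>x. x \<bullet> (A *v x) \<ge> c * (norm x)^2"
    using coercive_single[of A] pA by blast
  define m where "m = real (CARD('n)) * real (CARD('n)) + 1"
  have m: "m > 0" by (simp add: m_def add_nonneg_pos)
  define e where "e = c / m"
  have e: "e > 0" using c m by (simp add: e_def)
  show "\<exists>e>0. ball A e \<subseteq> {A. posdef (sym_part A)}"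
  proof (intro exI[of _ e] conjI e subsetI)
    fix X assume X: "X \<in> ball A e"
    define N where "N = X - A"
    have Nn: "norm N < e" using X by (simp add: N_def dist_norm norm_minus_commute)
    have Nij: "\<bar>N $ i $ j\<bar> \<le> norm N" for i j
      using order_trans[OF component_le_norm_cart Finite_Cartesian_Product.norm_nth_le] .
    have sumN: "(\<Sum>i\<in>UNIV. \<Sum>j\<in>UNIV. \<bar>N $ i $ j\<bar>) \<le> real (CARD('n)) * (real (CARD('n)) * norm N)"
      by (intro sum_bounded_above Nij) 
    have "real (CARD('n)) * (real (CARD('n)) * norm N) \<le> (m - 1) * e"
      using Nn by (simp add: m_def mult.assoc mult_left_mono)
    also have "(m - 1) * e < c" using m c by (simp add: e_def field_simps)
    finally have sN: "(\<Sum>i\<in>UNIV. \<Sum>j\<in>UNIV. \<bar>N $ i $ j\<bar>) < c" using sumN by linarith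
    have "x \<bullet> (sym_part X *v x) > 0" if x: "x \<noteq> 0" for x
    proof -
      have "x \<bullet> (sym_part X *v x) = x \<bullet> (A *v x) + x \<bullet> (N *v x)"
        by (simp add: quad_sym_part N_def matrix_vector_mult_diff_rdistrib inner_diff_right)
      moreover have "\<bar>x \<bullet> (N *v x)\<bar> \<le> (\<Sum>i\<in>UNIV. \<Sum>j\<in>UNIV. \<bar>N $ i $ j\<bar>) * (norm x)^2"
        by (rule quad_bound)
      moreover have "(\<Sum>i\<in>UNIV. \<Sum>j\<in>UNIV. \<bar>N $ i $ j\<bar>) * (norm x)^2 < c * (norm x)^2"
        using sN x by (intro mult_strict_right_mono) auto
      ultimately show ?thesis using c(2)[of x] by linarith
    qed
    then show "X \<in> {A. posdef (sym_part A)}" by (simp add: posdef_def sym_part_sym)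
  qed
qed

lemma mono_deriv:
  fixes F :: "real^'n^'n \<Rightarrow> real"
  assumes C1: "Ck_on (Suc k) (\<lambda>X. F (sym_part X)) S" and S: "open S" and AS: "A \<in> S"
    and Asym: "transpose A = A" and Apd: "posdef A"
    and mono: "\<forall>A B. posdef A \<and> posdef B \<longrightarrow> F (A + B) \<ge> F A"
    and Msym: "transpose M = M" and Mpsd: "\<forall>x. x \<bullet> (M *v x) \<ge> 0"
  shows "dd M (\<lambda>X. F (sym_part X)) A \<ge> 0"
proof -
  define \<Phi> where "\<Phi> = (\<lambda>X. F (sym_part X))"
  have C1': "Ck_on (Suc k) \<Phi> S" using C1 by (simp add: \<Phi>_def)
  have lin: "linear (\<lambda>v. dd v \<Phi> A)" by (rule Ck_Suc_linear[OF C1' S AS])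
  have key: "dd M' \<Phi> A \<ge> 0" if M'sym: "transpose M' = M'" and M'pos: "\<And>x. x \<noteq> 0 \<Longrightarrow> x \<bullet> (M' *v x) > 0" for M'
  proof (rule ccontr)
    assume neg: "\<not> dd M' \<Phi> A \<ge> 0"
    have vd: "((\<lambda>s. A + s *\<^sub>R M') has_vector_derivative M') (at 0)"
      unfolding has_vector_derivative_def by (auto intro!: derivative_eq_intros)
    have D: "((\<lambda>s. \<Phi> (A + s *\<^sub>R M')) has_real_derivative dd M' \<Phi> (A + 0 *\<^sub>R M')) (at 0)"
      by (rule chain1[OF C1' S _ vd]) (simp add: AS)
    obtain d where d: "d > 0" "\<And>h. h > 0 \<Longrightarrow> h < d \<Longrightarrow> \<Phi> (A + (0 + h) *\<^sub>R M') < \<Phi> (A + 0 *\<^sub>R M')"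
      using DERIV_neg_dec_right[OF D] neg by force
    define h where "h = d / 2"
    have h: "h > 0" "h < d" using d by (auto simp: h_def)
    have lt: "\<Phi> (A + h *\<^sub>R M') < \<Phi> A" using d(2)[OF h] by simp
    have pd: "posdef (h *\<^sub>R M')"
      unfolding posdef_def using M'sym M'pos h(1)
      by (auto simp: sym_iff scaleR_matrix_vector_assoc[symmetric])
    have ge: "F (A + h *\<^sub>R M') \<ge> F A" using mono Apd pd by blast
    have "transpose (A + h *\<^sub>R M') = A + h *\<^sub>R M'" using Asym M'sym by (simp add: sym_iff)
    then have "\<Phi> (A + h *\<^sub>R M') = F (A + h *\<^sub>R M')" by (simp add: \<Phi>_def sym_part_id)
    moreover have "\<Phi> A = F A" using Asym by (simp add: \<Phi>_def sym_part_id)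
    ultimately show False using lt ge by simp
  qed
  show ?thesis
  proof (rule ccontr)
    assume "\<not> dd M (\<lambda>X. F (sym_part X)) A \<ge> 0"
    then have neg: "dd M \<Phi> A < 0" by (simp add: \<Phi>_def)
    define b where "b = dd (mat 1) \<Phi> A"
    define bp where "bp = \<bar>b\<bar> + 1"
    have bp: "bp > 0" unfolding bp_def by (metis abs_ge_zero add_nonneg_pos zero_less_one)
    define \<kappa> where "\<kappa> = - dd M \<Phi> A / (2 * bp)"
    have "dd M \<Phi> A / (2 * bp) < 0" by (rule divide_neg_pos) (use neg bp in auto)
    then have \<kappa>: "\<kappa> > 0" by (simp add: \<kappa>_def)
    have "transpose (M + \<kappa> *\<^sub>R mat 1) = M + \<kappa> *\<^sub>R mat 1" using Msym by (simp add: sym_iff mat_def)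
    moreover have "x \<bullet> ((M + \<kappa> *\<^sub>R mat 1) *v x) > 0" if "x \<noteq> 0" for x
    proof -
      have "x \<bullet> ((M + \<kappa> *\<^sub>R mat 1) *v x) = x \<bullet> (M *v x) + \<kappa> * (x \<bullet> x)"
        by (simp add: matrix_vector_mult_add_rdistrib scaleR_matrix_vector_assoc[symmetric] inner_add_right)
      moreover have "x \<bullet> x > 0" using that by simp
      ultimately show ?thesis using Mpsd \<kappa> by (smt (verit) mult_pos_pos)
    qed
    ultimately have "dd (M + \<kappa> *\<^sub>R mat 1) \<Phi> A \<ge> 0" by (intro key) auto
    then have "dd M \<Phi> A + \<kappa> * b \<ge> 0"
      using linear_add[OF lin] linear_scale[OF lin] by (simp add: b_def)
    moreover have "\<kappa> * b \<le> \<kappa> * \<bar>b\<bar>" using \<kappa> by (simp add: mult_left_mono)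
    moreover have "\<kappa> * \<bar>b\<bar> < - dd M \<Phi> A"
    proof -
      have "\<kappa> * \<bar>b\<bar> \<le> \<kappa> * bp" using \<kappa> by (simp add: bp_def)
      also have "\<dots> = - dd M \<Phi> A / 2" unfolding \<kappa>_def using bp by simp
      finally show ?thesis using neg by simp
    qed
    ultimately show False by simp
  qed
qed

lemma matrix_neg_left: "(- (X::real^'n^'m)) ** Y = - (X ** Y)"
  by (vector matrix_matrix_mult_def sum_negf)
lemma matrix_neg_right: "(X::real^'n^'m) ** (- Y) = - (X ** Y)"
  by (vector matrix_matrix_mult_def sum_negf)

lemma transpose_mult3: "transpose (X ** (Y::real^'n^'n) ** Z) = transpose Z ** transpose Y ** transpose X"
  by (simp add: matrix_transpose_mul matrix_mul_assoc)

lemma inv_concavity: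
  fixes F :: "real^'n^'n \<Rightarrow> real"
  defines "\<Phi> \<equiv> (\<lambda>X. F (sym_part X))" and "S \<equiv> {X::real^'n^'n. posdef (sym_part X)}"
  assumes C2: "Ck_on (Suc (Suc 0)) \<Phi> S"
    and conc: "concave_on {A. posdef A} (\<lambda>A. - F (matrix_inv A))"
    and Asym: "transpose A = A" and Apos: "\<And>x. x \<noteq> 0 \<Longrightarrow> x \<bullet> (A *v x) > 0"
    and AB: "A ** B = mat 1" and BA: "B ** A = mat 1" and \<xi>sym: "transpose \<xi> = \<xi>"
  shows "F2 \<Phi> A \<xi> + 2 * dd (\<xi> ** B ** \<xi>) \<Phi> A \<ge> 0"
proof -
  have S: "open S" unfolding S_def by (rule S_open)
  have Bsym: "transpose B = B" by (rule inv_sym[OF AB BA Asym])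
  have Bpos: "x \<noteq> 0 \<Longrightarrow> x \<bullet> (B *v x) > 0" for x by (rule inv_pos[OF AB BA Apos Asym])
  define \<eta> where "\<eta> = B ** \<xi> ** B"
  have \<eta>sym: "transpose \<eta> = \<eta>" unfolding \<eta>_def by (simp add: transpose_mult3 Bsym \<xi>sym)
  obtain d where d: "d > 0" and P: "\<And>r. \<bar>r\<bar> < d \<Longrightarrow>
     posdef (B + r *\<^sub>R \<eta>) \<and>
     (B + r *\<^sub>R \<eta>) ** matrix_inv (B + r *\<^sub>R \<eta>) = mat 1 \<and>
     matrix_inv (B + r *\<^sub>R \<eta>) ** (B + r *\<^sub>R \<eta>) = mat 1 \<and>
     transpose (matrix_inv (B + r *\<^sub>R \<eta>)) = matrix_inv (B + r *\<^sub>R \<eta>) \<and>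
     (\<forall>x. x \<noteq> 0 \<longrightarrow> x \<bullet> (matrix_inv (B + r *\<^sub>R \<eta>) *v x) > 0) \<and>
     mderiv (\<lambda>s. matrix_inv (B + s *\<^sub>R \<eta>))
        (- (matrix_inv (B + r *\<^sub>R \<eta>) ** \<eta> ** matrix_inv (B + r *\<^sub>R \<eta>))) r"
    using inv_curve[OF Bsym Bpos \<eta>sym] by blast
  define \<gamma> where "\<gamma> r = matrix_inv (B + r *\<^sub>R \<eta>)" for r
  define \<gamma>1 where "\<gamma>1 r = - (\<gamma> r ** \<eta> ** \<gamma> r)" for r
  have \<gamma>eq: "(\<lambda>s. matrix_inv (B + s *\<^sub>R \<eta>)) = \<gamma>" by (simp add: fun_eq_iff \<gamma>_def)
  have Pg: "transpose (\<gamma> r) = \<gamma> r" "\<And>x. x \<noteq> 0 \<Longrightarrow> x \<bullet> (\<gamma> r *v x) > 0" "mderiv \<gamma> (\<gamma>1 r) r"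
    "\<gamma> r ** (B + r *\<^sub>R \<eta>) = mat 1" "posdef (B + r *\<^sub>R \<eta>)"
    if "\<bar>r\<bar> < d" for r
    using P[OF that] unfolding \<gamma>eq by (auto simp: \<gamma>_def \<gamma>1_def)
  have d0: "\<bar>0::real\<bar> < d" using d by simp
  have \<gamma>0: "\<gamma> 0 = A"
  proof -
    have "\<gamma> 0 ** B = mat 1" using Pg(4)[OF d0] by simp
    have "\<gamma> 0 = \<gamma> 0 ** (B ** A)" using BA by simp
    also have "\<dots> = (\<gamma> 0 ** B) ** A" by (rule matrix_mul_assoc)
    also have "\<dots> = A" using \<open>\<gamma> 0 ** B = mat 1\<close> by simp
    finally show ?thesis .
  qed
  have inS: "\<gamma> s \<in> S" if "\<bar>s\<bar> < d" for s
    using Pg(1,2)[OF that] by (simp add: S_def sym_part_id posdef_def)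
  have g1: "(\<gamma> has_vector_derivative \<gamma>1 s) (at s)" if "\<bar>s\<bar> < d" for s
    by (rule mderiv_vd[OF Pg(3)[OF that]])
  define \<gamma>2 where "\<gamma>2 = - ((\<gamma>1 0 ** \<eta> + \<gamma> 0 ** 0) ** \<gamma> 0 + (\<gamma> 0 ** \<eta>) ** \<gamma>1 0)"
  have m2: "mderiv \<gamma>1 \<gamma>2 0"
  proof -
    have a: "mderiv (\<lambda>s. \<gamma> s ** \<eta>) (\<gamma>1 0 ** \<eta> + \<gamma> 0 ** 0) 0"
      by (rule mderiv_mult[OF Pg(3)[OF d0] mderiv_const])
    have b: "mderiv (\<lambda>s. (\<gamma> s ** \<eta>) ** \<gamma> s) ((\<gamma>1 0 ** \<eta> + \<gamma> 0 ** 0) ** \<gamma> 0 + (\<gamma> 0 ** \<eta>) ** \<gamma>1 0) 0"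
      by (rule mderiv_mult[OF a Pg(3)[OF d0]])
    have "\<gamma>1 = (\<lambda>s. - ((\<gamma> s ** \<eta>) ** \<gamma> s))" by (simp add: fun_eq_iff \<gamma>1_def)
    then show ?thesis using mderiv_neg[OF b] by (simp add: \<gamma>2_def)
  qed
  have g2: "((\<lambda>s. \<gamma>1 s $ i $ j) has_real_derivative \<gamma>2 $ i $ j) (at 0)" for i j
    using m2 unfolding mderiv_def by blast
  have C2': "Ck_on (Suc (Suc 0)) \<Phi> S" by (rule C2)
  note ch = chain2[OF C2' S d inS g1 g2]
  define \<phi> where "\<phi> s = - \<Phi> (\<gamma> s)" for s
  have d1: "DERIV \<phi> s :> - dd (\<gamma>1 s) \<Phi> (\<gamma> s)" if "\<bar>s\<bar> < d" for s
    unfolding \<phi>_def by (rule DERIV_minus, rule ch(1)) (use that in auto)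
  have d2: "DERIV (\<lambda>s. - dd (\<gamma>1 s) \<Phi> (\<gamma> s)) 0 :> - (dd \<gamma>2 \<Phi> (\<gamma> 0) + F2 \<Phi> (\<gamma> 0) (\<gamma>1 0))"
    by (rule DERIV_minus, rule ch(2)) auto
  have Fval: "\<Phi> (\<gamma> s) = F (matrix_inv (B + s *\<^sub>R \<eta>))" if "\<bar>s\<bar> < d" for s
    using Pg(1)[OF that] by (simp add: \<Phi>_def sym_part_id \<gamma>_def)
  have mid: "\<phi> r + \<phi> (- r) \<le> 2 * \<phi> 0" if r: "\<bar>r\<bar> < d" for r
  proof -
    have r': "\<bar>- r\<bar> < d" using r by simp
    have cv: "convex_on {A. posdef A} (\<lambda>A. - (- F (matrix_inv A)))"
      using conc by (simp add: concave_on_def)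
    have x: "B + r *\<^sub>R \<eta> \<in> {A. posdef A}" using Pg(5)[OF r] by simp
    have y: "B + (- r) *\<^sub>R \<eta> \<in> {A. posdef A}" using Pg(5)[OF r'] by simp
    have "F (matrix_inv ((1/2) *\<^sub>R (B + r *\<^sub>R \<eta>) + (1/2) *\<^sub>R (B + (- r) *\<^sub>R \<eta>)))
        \<le> (1/2) * F (matrix_inv (B + r *\<^sub>R \<eta>)) + (1/2) * F (matrix_inv (B + (- r) *\<^sub>R \<eta>))"
    proof -
      have H: "\<And>x y u v. x \<in> {A. posdef A} \<Longrightarrow> y \<in> {A. posdef A} \<Longrightarrow> u \<ge> 0 \<Longrightarrow> v \<ge> 0 \<Longrightarrow> u + v = 1 \<Longrightarrow>
          - (- F (matrix_inv (u *\<^sub>R x + v *\<^sub>R y))) \<le> u * - (- F (matrix_inv x)) + v * - (- F (matrix_inv y))"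
        using cv unfolding convex_on_def by blast
      show ?thesis using H[OF x y, of "1/2" "1/2"] by simp
    qed
    moreover have "(1/2) *\<^sub>R (B + r *\<^sub>R \<eta>) + (1/2) *\<^sub>R (B + (- r) *\<^sub>R \<eta>) = B + 0 *\<^sub>R \<eta>"
      by (simp add: algebra_simps scaleR_2[symmetric])
    ultimately have "F (matrix_inv (B + 0 *\<^sub>R \<eta>))
        \<le> (1/2) * F (matrix_inv (B + r *\<^sub>R \<eta>)) + (1/2) * F (matrix_inv (B + (- r) *\<^sub>R \<eta>))"
      by simp
    then show ?thesis unfolding \<phi>_def using Fval[OF r] Fval[OF r'] Fval[OF d0] by simp
  qed
  have L: "- (dd \<gamma>2 \<Phi> (\<gamma> 0) + F2 \<Phi> (\<gamma> 0) (\<gamma>1 0)) \<le> 0"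
    by (rule concave_2nd[OF d d1 d2 mid])
  have \<gamma>10: "\<gamma>1 0 = - \<xi>"
  proof -
    have "A ** \<eta> ** A = (A ** B) ** \<xi> ** (B ** A)" by (simp add: \<eta>_def matrix_mul_assoc)
    then show ?thesis using AB BA by (simp add: \<gamma>1_def \<gamma>0)
  qed
  have \<gamma>2v: "\<gamma>2 = \<xi> ** B ** \<xi> + \<xi> ** B ** \<xi>"
  proof -
    have e1: "\<xi> ** \<eta> ** A = \<xi> ** B ** \<xi> ** (B ** A)" by (simp add: \<eta>_def matrix_mul_assoc)
    have e2: "A ** \<eta> ** \<xi> = (A ** B) ** \<xi> ** B ** \<xi>" by (simp add: \<eta>_def matrix_mul_assoc)
    show ?thesis unfolding \<gamma>2_def \<gamma>10 \<gamma>0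
      using e1 e2 AB BA by (simp add: matrix_neg_left matrix_neg_right)
  qed
  have A_S: "A \<in> S" using inS[OF d0] \<gamma>0 by simp
  have lin: "linear (\<lambda>v. dd v \<Phi> A)" by (rule Ck_Suc_linear[OF C2' S A_S])
  have "dd \<gamma>2 \<Phi> A = 2 * dd (\<xi> ** B ** \<xi>) \<Phi> A"
    unfolding \<gamma>2v linear_add[OF lin] by simp
  moreover have "F2 \<Phi> A (\<gamma>1 0) = F2 \<Phi> A \<xi>" unfolding \<gamma>10 by (rule F2_neg[OF C2' S A_S])
  ultimately show ?thesis using L \<gamma>0 by simp
qed

lemma Dl_append: "Dl (as @ bs) g = Dl as (Dl bs g)"
  by (induction as) auto

lemma line_Dl:
  assumes "sm U f" "open U" "p + s *\<^sub>R a \<in> U"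
  shows "((\<lambda>s. Dl as f (p + s *\<^sub>R a)) has_real_derivative Dl (a # as) f (p + s *\<^sub>R a)) (at s)"
  using line_deriv[OF sm_Dl[OF assms(1)] assms(2,3)] by simp

lemma sym_swap: "transpose M = M \<Longrightarrow> w \<bullet> ((M::real^'n^'n) *v u) = (M *v w) \<bullet> u"
  by (metis dot_lmul_matrix transpose_transpose vector_transpose_matrix)

lemma HM_line_mderiv:
  assumes sm: "sm U g" and U: "open U" and pU: "p + s *\<^sub>R a \<in> U"
  shows "mderiv (\<lambda>s. HM g (p + s *\<^sub>R a)) (HM (Dl [a] g) (p + s *\<^sub>R a)) s"
  unfolding mderiv_def
proof (intro allI)
  fix i j
  have "((\<lambda>s. Dl [E i, E j] g (p + s *\<^sub>R a)) has_real_derivative Dl [a, E i, E j] g (p + s *\<^sub>R a)) (at s)"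
    by (rule line_Dl[OF sm U pU])
  moreover have "Dl [a, E i, E j] g (p + s *\<^sub>R a) = Dl [E i, E j, a] g (p + s *\<^sub>R a)"
    using Dl_perm[OF sm U, of "[a, E i, E j]" "[E i, E j, a]"] pU by (simp add: add_mset_commute)
  moreover have "Dl [E i, E j, a] g = Dl [E i, E j] (Dl [a] g)"
    using Dl_append[of "[E i, E j]" "[a]" g] by simp
  ultimately show "((\<lambda>s. HM g (p + s *\<^sub>R a) $ i $ j) has_real_derivative HM (Dl [a] g) (p + s *\<^sub>R a) $ i $ j) (at s)"
    by (simp add: HM_def)
qed

lemma quad_curve:
  fixes a b b' c a1 b1 b'1 c1 :: "real \<Rightarrow> real"
  assumes d: "d > 0"
    and da: "\<And>s. \<bar>s\<bar> < d \<Longrightarrow> DERIV a s :> a1 s" and da1: "DERIV a1 0 :> a2"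
    and db: "\<And>s. \<bar>s\<bar> < d \<Longrightarrow> DERIV b s :> b1 s" and db1: "DERIV b1 0 :> b2"
    and db': "\<And>s. \<bar>s\<bar> < d \<Longrightarrow> DERIV b' s :> b'1 s" and db'1: "DERIV b'1 0 :> b'2"
    and dc: "\<And>s. \<bar>s\<bar> < d \<Longrightarrow> DERIV c s :> c1 s" and dc1: "DERIV c1 0 :> c2"
  shows "\<And>s. \<bar>s\<bar> < d \<Longrightarrow> DERIV (\<lambda>s. kA + s * kB - a s - s * b s - s * b' s - s^2 * c s) s :>
            (kB - a1 s - (b s + s * b1 s) - (b' s + s * b'1 s) - (2 * s * c s + s^2 * c1 s))"
    and "DERIV (\<lambda>s. kB - a1 s - (b s + s * b1 s) - (b' s + s * b'1 s) - (2 * s * c s + s^2 * c1 s)) 0 :>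
            (- a2 - 2 * b1 0 - 2 * b'1 0 - 2 * c 0)"
proof -
  fix s :: real assume s: "\<bar>s\<bar> < d"
  show "DERIV (\<lambda>s. kA + s * kB - a s - s * b s - s * b' s - s^2 * c s) s :>
            (kB - a1 s - (b s + s * b1 s) - (b' s + s * b'1 s) - (2 * s * c s + s^2 * c1 s))"
    using da[OF s] db[OF s] db'[OF s] dc[OF s]
    by (auto intro!: derivative_eq_intros simp: power2_eq_square algebra_simps)
next
  have d0: "\<bar>0::real\<bar> < d" using d by simp
  show "DERIV (\<lambda>s. kB - a1 s - (b s + s * b1 s) - (b' s + s * b'1 s) - (2 * s * c s + s^2 * c1 s)) 0 :>
            (- a2 - 2 * b1 0 - 2 * b'1 0 - 2 * c 0)"
    using da1 db[OF d0] db1 db'[OF d0] db'1 dc[OF d0] dc1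
    by (auto intro!: derivative_eq_intros simp: power2_eq_square algebra_simps)
qed

lemma mv_neg: "(M::real^'n^'m) *v (- x) = - (M *v x)"
  by (simp add: matrix_vector_mult_def vec_eq_iff sum_negf)

lemma sp_line: "(x, t) + s *\<^sub>R sp v = (x + s *\<^sub>R v, t)"
  by (simp add: sp_def)
lemma tau_line: "(x, 0) + s *\<^sub>R tau = (x, s)"
  by (simp add: tau_def)

lemma interior_contra:
  fixes f :: "(real^'n) \<times> real \<Rightarrow> real" and F :: "real^'n^'n \<Rightarrow> real"
    and \<Psi> :: "(real^'n) \<times> real \<Rightarrow> real^'n \<Rightarrow> real"
  assumes smf: "sm U f" and U: "open U"
    and C2: "Ck_on (Suc (Suc 0)) (\<lambda>X. F (sym_part X)) {X. posdef (sym_part X)}"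
    and mono: "\<forall>A B. posdef A \<and> posdef B \<longrightarrow> F (A + B) \<ge> F A"
    and conc: "concave_on {A. posdef A} (\<lambda>A. - F (matrix_inv A))"
    and O: "open Om" "x0 \<in> Om"
    and OU: "\<And>x. x \<in> Om \<Longrightarrow> (x, t0) \<in> U"
    and pd: "\<And>x. x \<in> Om \<Longrightarrow> posdef (HM f (x, t0))"
    and eqn: "\<And>x. x \<in> Om \<Longrightarrow> Dl [tau] f (x, t0) = F (HM f (x, t0))"
    and \<delta>: "\<delta> > 0" and h0: "h0 > 0"
    and tU: "\<And>h. 0 < h \<Longrightarrow> h < h0 \<Longrightarrow> (x0, t0 - h) \<in> U"
    and R: "norm v0 < R"
    and maxt: "\<And>h. 0 < h \<Longrightarrow> h < h0 \<Longrightarrow> \<Psi> (x0, t0 - h) v0 \<le> \<Psi> (x0, t0) v0"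
    and maxx: "\<And>x v. x \<in> Om \<Longrightarrow> norm v \<le> R \<Longrightarrow> \<Psi> (x, t0) v \<le> \<Psi> (x0, t0) v0"
    and \<Psi>def: "\<And>p v. \<Psi> p v = 2 * (v \<bullet> e) - v \<bullet> (HM f p *v v) - \<delta> * snd p"
  shows False
proof -
  define \<Phi> where "\<Phi> = (\<lambda>X::real^'n^'n. F (sym_part X))"
  define S where "S = {X::real^'n^'n. posdef (sym_part X)}"
  have S: "open S" unfolding S_def by (rule S_open)
  have C2': "Ck_on (Suc (Suc 0)) \<Phi> S" using C2 by (simp add: \<Phi>_def S_def)
  define p0 where "p0 = (x0, t0)"
  have p0U: "p0 \<in> U" using OU[OF O(2)] by (simp add: p0_def)
  define A0 where "A0 = HM f p0"
  have A0sym: "transpose A0 = A0" unfolding A0_def by (rule HM_sym[OF smf U p0U])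
  have A0pd: "posdef A0" using pd[OF O(2)] by (simp add: A0_def p0_def)
  have A0pos: "\<And>x. x \<noteq> 0 \<Longrightarrow> x \<bullet> (A0 *v x) > 0" using A0pd by (simp add: posdef_def)
  have A0S: "A0 \<in> S" using A0pd A0sym by (simp add: S_def sym_part_id)
  define B where "B = matrix_inv A0"
  have AB: "A0 ** B = mat 1" and BA: "B ** A0 = mat 1"
    using pos_invertible[of A0] A0pos by (auto simp: B_def)
  have Bsym: "transpose B = B" by (rule inv_sym[OF AB BA A0sym])
  define a where "a = sp v0"
  define \<xi> where "\<xi> = HM (Dl [a] f) p0"
  define V where "V = HM (Dl [a, a] f) p0"
  have \<xi>sym: "transpose \<xi> = \<xi>" unfolding \<xi>_def by (rule HM_sym[OF sm_Dl[OF smf] U p0U])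
  have Vsym: "transpose V = V" unfolding V_def by (rule HM_sym[OF sm_Dl[OF smf] U p0U])
  define D where "D = Dl [tau, a, a] f p0"
  have Dneg: "D \<le> - \<delta>"
  proof -
    define gt where "gt t = 2 * (v0 \<bullet> e) - Dl [a, a] f ((x0, 0) + t *\<^sub>R tau) - \<delta> * t" for t
    have "DERIV gt t0 :> 0 - Dl [tau, a, a] f ((x0, 0) + t0 *\<^sub>R tau) - \<delta> * 1"
      unfolding gt_def
      by (intro DERIV_diff DERIV_const DERIV_cmult DERIV_ident line_Dl[OF smf U]) (use p0U in \<open>simp add: tau_line p0_def\<close>)
    then have dg: "DERIV gt t0 :> - D - \<delta>" by (simp add: D_def tau_line p0_def)
    have gval: "gt t = \<Psi> (x0, t) v0" if "(x0, t) \<in> U" for t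
      using HM_quad[OF smf U that, of v0 v0] by (simp add: gt_def \<Psi>def tau_line a_def)
    have "- D - \<delta> \<ge> 0"
    proof (rule left_deriv_max[OF dg h0])
      fix h :: real assume h: "0 < h" "h < h0"
      show "gt (t0 - h) \<le> gt t0"
        using maxt[OF h] gval[OF tU[OF h]] gval[of t0] p0U by (simp add: p0_def)
    qed
    then show ?thesis by simp
  qed
  have Deq: "D = dd V \<Phi> A0 + F2 \<Phi> A0 \<xi>"
  proof -
    obtain r where r: "r > 0" "ball x0 r \<subseteq> Om" using O open_contains_ball by blast
    define d1 where "d1 = r / (norm v0 + 1)"
    have nv: "norm v0 + 1 > 0" by (smt (verit) norm_ge_zero)
    have d1: "d1 > 0" using r nv by (simp add: d1_def)
    have inO: "x0 + s *\<^sub>R v0 \<in> Om" if "\<bar>s\<bar> < d1" for s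
    proof -
      have "\<bar>s\<bar> * norm v0 \<le> \<bar>s\<bar> * (norm v0 + 1)" by (simp add: mult_left_mono)
      also have "\<dots> < d1 * (norm v0 + 1)" using that nv by (simp add: mult_strict_right_mono)
      also have "\<dots> = r" using nv by (simp add: d1_def)
      finally have "dist x0 (x0 + s *\<^sub>R v0) < r" by (simp add: dist_self_add)
      then show ?thesis using r(2) by auto
    qed
    have qeq: "p0 + s *\<^sub>R a = (x0 + s *\<^sub>R v0, t0)" for s by (simp add: p0_def a_def sp_line)
    have qU: "p0 + s *\<^sub>R a \<in> U" if "\<bar>s\<bar> < d1" for s using OU[OF inO[OF that]] qeq by simp
    define \<gamma> where "\<gamma> s = HM f (p0 + s *\<^sub>R a)" for s
    define \<gamma>1 where "\<gamma>1 s = HM (Dl [a] f) (p0 + s *\<^sub>R a)" for s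
    have \<gamma>sym: "transpose (\<gamma> s) = \<gamma> s" if "\<bar>s\<bar> < d1" for s
      unfolding \<gamma>_def by (rule HM_sym[OF smf U qU[OF that]])
    have inS: "\<gamma> s \<in> S" if "\<bar>s\<bar> < d1" for s
      using pd[OF inO[OF that]] \<gamma>sym[OF that] qeq by (simp add: S_def sym_part_id \<gamma>_def)
    have g1: "(\<gamma> has_vector_derivative \<gamma>1 s) (at s)" if "\<bar>s\<bar> < d1" for s
    proof -
      have "\<gamma> = (\<lambda>s. HM f (p0 + s *\<^sub>R a))" by (simp add: fun_eq_iff \<gamma>_def)
      then show ?thesis using mderiv_vd[OF HM_line_mderiv[OF smf U qU[OF that]]] by (simp add: \<gamma>1_def)
    qed
    have p0U': "p0 + 0 *\<^sub>R a \<in> U" using p0U by simp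
    have g2: "((\<lambda>s. \<gamma>1 s $ i $ j) has_real_derivative V $ i $ j) (at 0)" for i j
      using HM_line_mderiv[OF sm_Dl[OF smf] U p0U', of "[a]"] unfolding mderiv_def
      by (simp add: \<gamma>1_def V_def)
    note ch = chain2[OF C2' S d1, of \<gamma> \<gamma>1 V]
    have c1: "DERIV (\<lambda>s. \<Phi> (\<gamma> s)) s :> dd (\<gamma>1 s) \<Phi> (\<gamma> s)" if "\<bar>s\<bar> < d1" for s
      by (rule ch(1)) (use inS g1 g2 that in auto)
    have c2: "DERIV (\<lambda>s. dd (\<gamma>1 s) \<Phi> (\<gamma> s)) 0 :> dd V \<Phi> A0 + F2 \<Phi> A0 \<xi>"
    proof -
      have "DERIV (\<lambda>s. dd (\<gamma>1 s) \<Phi> (\<gamma> s)) 0 :> dd V \<Phi> (\<gamma> 0) + F2 \<Phi> (\<gamma> 0) (\<gamma>1 0)"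
        by (rule ch(2)) (use inS g1 g2 in auto)
      then show ?thesis by (simp add: \<gamma>_def \<gamma>1_def A0_def \<xi>_def)
    qed
    have eqf: "Dl [tau] f (p0 + s *\<^sub>R a) = \<Phi> (\<gamma> s)" if "\<bar>s\<bar> < d1" for s
      using eqn[OF inO[OF that]] \<gamma>sym[OF that] qeq by (simp add: \<Phi>_def \<gamma>_def sym_part_id)
    have e1: "Dl [a, tau] f (p0 + s *\<^sub>R a) = dd (\<gamma>1 s) \<Phi> (\<gamma> s)" if s: "\<bar>s\<bar> < d1" for s
    proof -
      have l1: "DERIV (\<lambda>s. Dl [tau] f (p0 + s *\<^sub>R a)) s :> Dl [a, tau] f (p0 + s *\<^sub>R a)"
        by (rule line_Dl[OF smf U qU[OF s]])
      have "DERIV (\<lambda>s. \<Phi> (\<gamma> s)) s :> Dl [a, tau] f (p0 + s *\<^sub>R a)"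
      proof (rule has_field_derivative_transform_within_open[OF l1, of "ball 0 d1"])
        show "open (ball (0::real) d1)" by simp
        show "s \<in> ball 0 d1" using s by simp
        fix x :: real assume "x \<in> ball 0 d1"
        then show "Dl [tau] f (p0 + x *\<^sub>R a) = \<Phi> (\<gamma> x)" using eqf by simp
      qed
      then show ?thesis using DERIV_unique c1[OF s] by blast
    qed
    have l2: "DERIV (\<lambda>s. Dl [a, tau] f (p0 + s *\<^sub>R a)) 0 :> Dl [a, a, tau] f (p0 + 0 *\<^sub>R a)"
      by (rule line_Dl[OF smf U p0U'])
    have l2': "DERIV (\<lambda>s. Dl [a, tau] f (p0 + s *\<^sub>R a)) 0 :> Dl [a, a, tau] f p0"
      using l2 by simp
    have "DERIV (\<lambda>s. dd (\<gamma>1 s) \<Phi> (\<gamma> s)) 0 :> Dl [a, a, tau] f p0"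
    proof (rule has_field_derivative_transform_within_open[OF l2', of "ball 0 d1"])
      show "open (ball (0::real) d1)" by simp
      show "0 \<in> ball (0::real) d1" using d1 by simp
      fix x :: real assume "x \<in> ball 0 d1"
      then show "Dl [a, tau] f (p0 + x *\<^sub>R a) = dd (\<gamma>1 x) \<Phi> (\<gamma> x)" using e1 by simp
    qed
    then have "Dl [a, a, tau] f p0 = dd V \<Phi> A0 + F2 \<Phi> A0 \<xi>" using DERIV_unique c2 by blast
    moreover have "D = Dl [a, a, tau] f p0"
      unfolding D_def using Dl_perm[OF smf U, of "[tau, a, a]" "[a, a, tau]"] p0U by simp
    ultimately show ?thesis by simp
  qed
  \<comment> \<open>spatial second-order condition\<close>
  have Xineq: "w \<bullet> (V *v w) \<ge> 2 * ((\<xi> *v w) \<bullet> (B *v (\<xi> *v w)))" for w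
  proof -
    define y where "y = \<xi> *v w"
    define z where "z = - (B *v y)"
    define b where "b = sp w"
    define c where "c = sp z"
    obtain r where r: "r > 0" "ball x0 r \<subseteq> Om" using O open_contains_ball by blast
    have nw: "norm w + 1 > 0" by (smt (verit) norm_ge_zero)
    have nz: "norm z + 1 > 0" by (smt (verit) norm_ge_zero)
    define d2 where "d2 = min (r / (norm w + 1)) ((R - norm v0) / (norm z + 1))"
    have d2: "d2 > 0" using r nw nz R by (simp add: d2_def)
    have inO: "x0 + s *\<^sub>R w \<in> Om" if "\<bar>s\<bar> < d2" for s
    proof -
      have "\<bar>s\<bar> * norm w \<le> \<bar>s\<bar> * (norm w + 1)" by (simp add: mult_left_mono)
      also have "\<dots> < (r / (norm w + 1)) * (norm w + 1)"
        using that nw by (intro mult_strict_right_mono) (auto simp: d2_def)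
      also have "\<dots> = r" using nw by simp
      finally have "dist x0 (x0 + s *\<^sub>R w) < r" by (simp add: dist_self_add)
      then show ?thesis using r(2) by auto
    qed
    have inR: "norm (v0 + s *\<^sub>R z) \<le> R" if "\<bar>s\<bar> < d2" for s
    proof -
      have "norm (v0 + s *\<^sub>R z) \<le> norm v0 + \<bar>s\<bar> * norm z"
        using norm_triangle_ineq[of v0 "s *\<^sub>R z"] by simp
      also have "\<bar>s\<bar> * norm z \<le> \<bar>s\<bar> * (norm z + 1)" by (simp add: mult_left_mono)
      also have "\<dots> \<le> ((R - norm v0) / (norm z + 1)) * (norm z + 1)"
        using that nz by (intro mult_right_mono) (auto simp: d2_def)
      also have "\<dots> = R - norm v0" using nz by simp
      finally show ?thesis by simp
    qed
    have Peq: "p0 + s *\<^sub>R b = (x0 + s *\<^sub>R w, t0)" for s by (simp add: p0_def b_def sp_line)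
    have PU: "p0 + s *\<^sub>R b \<in> U" if "\<bar>s\<bar> < d2" for s using OU[OF inO[OF that]] Peq by simp
    have p0U': "p0 + 0 *\<^sub>R b \<in> U" using p0U by simp
    define fa where "fa s = Dl [a, a] f (p0 + s *\<^sub>R b)" for s
    define fa1 where "fa1 s = Dl [b, a, a] f (p0 + s *\<^sub>R b)" for s
    define fb where "fb s = Dl [a, c] f (p0 + s *\<^sub>R b)" for s
    define fb1 where "fb1 s = Dl [b, a, c] f (p0 + s *\<^sub>R b)" for s
    define fb' where "fb' s = Dl [c, a] f (p0 + s *\<^sub>R b)" for s
    define fb'1 where "fb'1 s = Dl [b, c, a] f (p0 + s *\<^sub>R b)" for s
    define fc where "fc s = Dl [c, c] f (p0 + s *\<^sub>R b)" for s
    define fc1 where "fc1 s = Dl [b, c, c] f (p0 + s *\<^sub>R b)" for s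
    have da: "DERIV fa s :> fa1 s" if "\<bar>s\<bar> < d2" for s
      unfolding fa_def fa1_def by (rule line_Dl[OF smf U PU[OF that]])
    have db: "DERIV fb s :> fb1 s" if "\<bar>s\<bar> < d2" for s
      unfolding fb_def fb1_def by (rule line_Dl[OF smf U PU[OF that]])
    have db': "DERIV fb' s :> fb'1 s" if "\<bar>s\<bar> < d2" for s
      unfolding fb'_def fb'1_def by (rule line_Dl[OF smf U PU[OF that]])
    have dc: "DERIV fc s :> fc1 s" if "\<bar>s\<bar> < d2" for s
      unfolding fc_def fc1_def by (rule line_Dl[OF smf U PU[OF that]])
    have da1: "DERIV fa1 0 :> Dl [b, b, a, a] f (p0 + 0 *\<^sub>R b)"
      unfolding fa1_def by (rule line_Dl[OF smf U p0U'])
    have db1: "DERIV fb1 0 :> Dl [b, b, a, c] f (p0 + 0 *\<^sub>R b)"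
      unfolding fb1_def by (rule line_Dl[OF smf U p0U'])
    have db'1: "DERIV fb'1 0 :> Dl [b, b, c, a] f (p0 + 0 *\<^sub>R b)"
      unfolding fb'1_def by (rule line_Dl[OF smf U p0U'])
    have dc1: "DERIV fc1 0 :> Dl [b, b, c, c] f (p0 + 0 *\<^sub>R b)"
      unfolding fc1_def by (rule line_Dl[OF smf U p0U'])
    define k0 where "k0 = 2 * (v0 \<bullet> e) - \<delta> * t0"
    define k1 where "k1 = 2 * (z \<bullet> e)"
    note qc1 = quad_curve(1)[OF d2 da da1 db db1 db' db'1 dc dc1, where kA=k0 and kB=k1]
    note qc2 = quad_curve(2)[OF d2 da da1 db db1 db' db'1 dc dc1, where kB=k1]
    define \<phi> where "\<phi> s = k0 + s * k1 - fa s - s * fb s - s * fb' s - s^2 * fc s" for s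
    have \<phi>val: "\<phi> s = \<Psi> (x0 + s *\<^sub>R w, t0) (v0 + s *\<^sub>R z)" if "\<bar>s\<bar> < d2" for s
    proof -
      define H where "H = HM f (p0 + s *\<^sub>R b)"
      have q1: "v0 \<bullet> (H *v v0) = fa s" using HM_quad[OF smf U PU[OF that], of v0 v0] by (simp add: H_def fa_def a_def)
      have q2: "v0 \<bullet> (H *v z) = fb s" using HM_quad[OF smf U PU[OF that], of v0 z] by (simp add: H_def fb_def a_def c_def)
      have q3: "z \<bullet> (H *v v0) = fb' s" using HM_quad[OF smf U PU[OF that], of z v0] by (simp add: H_def fb'_def a_def c_def)
      have q4: "z \<bullet> (H *v z) = fc s" using HM_quad[OF smf U PU[OF that], of z z] by (simp add: H_def fc_def c_def)
      have "(v0 + s *\<^sub>R z) \<bullet> (H *v (v0 + s *\<^sub>R z))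
          = v0 \<bullet> (H *v v0) + s * (v0 \<bullet> (H *v z)) + s * (z \<bullet> (H *v v0)) + s^2 * (z \<bullet> (H *v z))"
        by (simp add: matrix_vector_right_distrib matrix_vector_mult_scaleR inner_add_left inner_add_right
            algebra_simps power2_eq_square)
      then show ?thesis using q1 q2 q3 q4 Peq[of s]
        by (simp add: \<phi>_def \<Psi>def H_def k0_def k1_def inner_add_left algebra_simps)
    qed
    have \<phi>max: "\<phi> s \<le> \<phi> 0" if "\<bar>s\<bar> < d2" for s
    proof -
      have "\<phi> s \<le> \<Psi> (x0, t0) v0" using \<phi>val[OF that] maxx[OF inO[OF that] inR[OF that]] by simp
      also have "\<Psi> (x0, t0) v0 = \<phi> 0" using \<phi>val[of 0] d2 by simp
      finally show ?thesis .
    qed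
    have L: "- Dl [b, b, a, a] f (p0 + 0 *\<^sub>R b) - 2 * fb1 0 - 2 * fb'1 0 - 2 * fc 0 \<le> 0"
    proof -
      have pe: "\<phi> = (\<lambda>s. k0 + s * k1 - fa s - s * fb s - s * fb' s - s^2 * fc s)"
        by (simp add: fun_eq_iff \<phi>_def)
      have qd1: "\<And>s. \<bar>s\<bar> < d2 \<Longrightarrow> DERIV \<phi> s :>
            (k1 - fa1 s - (fb s + s * fb1 s) - (fb' s + s * fb'1 s) - (2 * s * fc s + s^2 * fc1 s))"
        unfolding pe by (rule qc1)
      show ?thesis by (rule second_deriv_max[OF d2 qd1 qc2 \<phi>max])
    qed
    have i1: "Dl [b, b, a, a] f (p0 + 0 *\<^sub>R b) = w \<bullet> (V *v w)"
      using HM_quad[OF sm_Dl[OF smf, of "[a, a]"] U p0U, of w w] Dl_append[of "[b, b]" "[a, a]" f]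
      by (simp add: V_def b_def)
    have yz: "Dl [c, b, a] f p0 = z \<bullet> y"
      using HM_quad[OF sm_Dl[OF smf, of "[a]"] U p0U, of z w] Dl_append[of "[c, b]" "[a]" f]
      by (simp add: \<xi>_def b_def c_def y_def)
    have i2: "fb1 0 = z \<bullet> y"
      using Dl_perm[OF smf U, of "[b, a, c]" "[c, b, a]"] p0U yz by (simp add: fb1_def add_mset_commute)
    have i3: "fb'1 0 = z \<bullet> y"
      using Dl_perm[OF smf U, of "[b, c, a]" "[c, b, a]"] p0U yz by (simp add: fb'1_def add_mset_commute)
    have i4: "fc 0 = z \<bullet> (A0 *v z)"
      using HM_quad[OF smf U p0U, of z z] by (simp add: fc_def A0_def c_def)
    have "A0 *v (B *v y) = y" using AB by (simp add: matrix_vector_mul_assoc)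
    then have Az: "A0 *v z = - y" by (simp add: z_def mv_neg)
    have "w \<bullet> (V *v w) + 4 * (z \<bullet> y) + 2 * (z \<bullet> (A0 *v z)) \<ge> 0"
      using L i1 i2 i3 i4 by simp
    then have "w \<bullet> (V *v w) - 2 * (y \<bullet> (B *v y)) \<ge> 0"
      using Az by (simp add: z_def inner_commute)
    then show ?thesis by (simp add: y_def)
  qed
  define M where "M = V - 2 *\<^sub>R (\<xi> ** B ** \<xi>)"
  have Qsym: "transpose (\<xi> ** B ** \<xi>) = \<xi> ** B ** \<xi>"
    using transpose_mult3[of \<xi> B \<xi>] \<xi>sym Bsym by simp
  have Msym: "transpose M = M"
    using Vsym Qsym unfolding M_def sym_iff by simp
  have Mpsd: "\<forall>w. w \<bullet> (M *v w) \<ge> 0"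
  proof
    fix w
    have "w \<bullet> ((\<xi> ** B ** \<xi>) *v w) = (\<xi> *v w) \<bullet> (B *v (\<xi> *v w))"
      using sym_swap[OF \<xi>sym, of w "B *v (\<xi> *v w)"] by (simp add: matrix_vector_mul_assoc[symmetric])
    then have "w \<bullet> (M *v w) = w \<bullet> (V *v w) - 2 * ((\<xi> *v w) \<bullet> (B *v (\<xi> *v w)))"
      by (simp add: M_def matrix_vector_mult_diff_rdistrib scaleR_matrix_vector_assoc[symmetric] inner_diff_right)
    then show "w \<bullet> (M *v w) \<ge> 0" using Xineq[of w] by simp
  qed
  have "dd M \<Phi> A0 \<ge> 0"
    using mono_deriv[OF C2'[unfolded \<Phi>_def] S A0S A0sym A0pd mono Msym Mpsd] by (simp add: \<Phi>_def)
  moreover have "dd M \<Phi> A0 = dd V \<Phi> A0 - 2 * dd (\<xi> ** B ** \<xi>) \<Phi> A0"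
    using linear_diff[OF Ck_Suc_linear[OF C2' S A0S]] linear_scale[OF Ck_Suc_linear[OF C2' S A0S]]
    by (simp add: M_def)
  moreover have "F2 \<Phi> A0 \<xi> + 2 * dd (\<xi> ** B ** \<xi>) \<Phi> A0 \<ge> 0"
    using inv_concavity[OF C2[folded \<Phi>_def S_def, unfolded \<Phi>_def S_def] conc A0sym A0pos AB BA \<xi>sym]
    by (simp add: \<Phi>_def)
  ultimately have "D \<ge> 0" using Deq by simp
  then show False using Dneg \<delta> by simp
qed

theorem theorem3p3:
  fixes \<Omega> :: "(real^'n) set" and u :: "real^'n \<Rightarrow> real \<Rightarrow> real"
    and F :: "real^'n^'n \<Rightarrow> real" and T \<epsilon> :: real
  assumes dom: "open \<Omega>" "connected \<Omega>" "bounded \<Omega>" "\<Omega> \<noteq> {}"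
    and smooth: "\<exists>U. open U \<and> closure \<Omega> \<times> {0..T} \<subseteq> U \<and> smooth_on (\<lambda>(x, t). u x t) U"
    and F_C2: "Ck_on 2 (\<lambda>A. F (sym_part A)) {A. posdef (sym_part A)}"
    and F_mono: "\<forall>A B. posdef A \<and> posdef B \<longrightarrow> F (A + B) \<ge> F A"
    and F_star_concave: "concave_on {A. posdef A} (\<lambda>A. - F (matrix_inv A))"
    and solution: "\<forall>x\<in>\<Omega>. \<forall>t\<in>{0<..T}.
        posdef (hess u x t) \<and> time_deriv u x t = F (hess u x t)"
    and eps: "\<epsilon> > 0"
    and init: "\<forall>x\<in>\<Omega>. mat_ge (hess u x 0) (\<epsilon> *\<^sub>R mat 1)"
    and bdry: "\<forall>x\<in>frontier \<Omega>. \<forall>t\<in>{0..T}. mat_ge (hess u x t) (\<epsilon> *\<^sub>R mat 1)"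
  shows "\<forall>x\<in>\<Omega>. \<forall>t\<in>{0..T}. mat_ge (hess u x t) (\<epsilon> *\<^sub>R mat 1)"
proof (intro ballI)
  fix x1 t1 assume x1: "x1 \<in> \<Omega>" and t1: "t1 \<in> {0..T}"
  obtain U where U: "open U" and KU: "closure \<Omega> \<times> {0..T} \<subseteq> U"
    and smU: "smooth_on (\<lambda>(x, t). u x t) U" using smooth by blast
  define f where "f = (\<lambda>(x, t). u x t)"
  have smf: "sm U f" using smU by (simp add: f_def smooth_on_def sm_def)
  have smf': "sm U (\<lambda>(x, t). u x t)" using smf by (simp add: f_def)
  have C2: "Ck_on (Suc (Suc 0)) (\<lambda>A. F (sym_part A)) {A. posdef (sym_part A)}"
    using F_C2 by (simp add: numeral_2_eq_2)
  define K where "K = closure \<Omega> \<times> {0..T}"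
  have KU': "K \<subseteq> U" using KU by (simp add: K_def)
  have hessHM: "hess u x t = HM f (x, t)" if "(x, t) \<in> U" for x t
    using hess_Dl[OF smf' U that] by (simp add: f_def)
  have tdD: "time_deriv u x t = Dl [tau] f (x, t)" if "(x, t) \<in> U" for x t
    using time_deriv_Dl[OF smf' U that] by (simp add: f_def)
  have cl: "closure \<Omega> = \<Omega> \<union> frontier \<Omega>"
    using dom(1) by (metis closure_Un_frontier)
  have notfront: "x \<in> \<Omega>" if "x \<in> closure \<Omega>" "x \<notin> frontier \<Omega>" for x
    using that cl by blast
  have OmK: "(x, t) \<in> K" if "x \<in> \<Omega>" "t \<in> {0..T}" for x t
    using that closure_subset by (auto simp: K_def)
  have geps: "\<forall>y. y \<bullet> (HM f p *v y) \<ge> \<epsilon> * (norm y)^2"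
    if "p \<in> K" "fst p \<in> frontier \<Omega> \<or> snd p = 0" for p
  proof -
    obtain x t where p: "p = (x, t)" by (cases p)
    have xt: "x \<in> closure \<Omega>" "t \<in> {0..T}" using that(1) by (auto simp: p K_def)
    have pU: "(x, t) \<in> U" using that(1) KU' p by auto
    have "mat_ge (hess u x t) (\<epsilon> *\<^sub>R mat 1)"
    proof (cases "x \<in> frontier \<Omega>")
      case True then show ?thesis using bdry xt by blast
    next
      case False
      then have "t = 0" "x \<in> \<Omega>" using that(2) notfront[OF xt(1)] by (auto simp: p)
      then show ?thesis using init by blast
    qed
    then show ?thesis using hessHM[OF pU] by (simp add: mat_ge_iff p)
  qed
  have posK: "x \<bullet> (HM f p *v x) > 0" if "p \<in> K" "x \<noteq> 0" for p x
  proof -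
    obtain y t where p: "p = (y, t)" by (cases p)
    have yt: "y \<in> closure \<Omega>" "t \<in> {0..T}" using that(1) by (auto simp: p K_def)
    have pU: "(y, t) \<in> U" using that(1) KU' p by auto
    show ?thesis
    proof (cases "y \<in> frontier \<Omega> \<or> t = 0")
      case True
      then have "x \<bullet> (HM f p *v x) \<ge> \<epsilon> * (norm x)^2" using geps[OF that(1)] by (auto simp: p)
      moreover have "\<epsilon> * (norm x)^2 > 0" using eps that(2) by simp
      ultimately show ?thesis by linarith
    next
      case False
      then have "y \<in> \<Omega>" "t \<in> {0<..T}" using notfront[OF yt(1)] yt(2) by auto
      then have "posdef (hess u y t)" using solution by blast
      then show ?thesis using hessHM[OF pU] that(2) by (simp add: posdef_def p)
    qed
  qed
  have contK: "continuous_on K (\<lambda>p. HM f p $ i $ j)" for i j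
  proof -
    have "continuous_on U (Dl [E i, E j] f)" by (rule sm_cont[OF sm_Dl[OF smf]])
    then show ?thesis using KU' by (simp add: HM_def continuous_on_subset)
  qed
  have cK: "compact K" unfolding K_def
    using dom(3) by (intro compact_Times compact_closure[THEN iffD2]) auto
  obtain c where c: "c > 0" "\<And>p x. p \<in> K \<Longrightarrow> x \<bullet> (HM f p *v x) \<ge> c * (norm x)^2"
    using coercive_family[OF cK contK posK] by blast
  have claim: "2 * (v \<bullet> e) - v \<bullet> (HM f p *v v) \<le> (norm e)^2 / \<epsilon>" if pK: "p \<in> K" for e v p
  proof -
    define \<Psi> where "\<Psi> \<delta> q w = 2 * (w \<bullet> e) - w \<bullet> (HM f q *v w) - \<delta> * snd q" for \<delta> q w
    have dclaim: "\<Psi> \<delta> p v \<le> (norm e)^2 / \<epsilon>" if \<delta>: "\<delta> > 0" for \<delta>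
    proof -
      define R where "R = max (norm v) (2 * norm e / c) + 1"
      have R0: "R > 0"
        using norm_ge_zero[of v] max.cobounded1[of "norm v" "2 * norm e / c"] unfolding R_def by linarith
      have Rv: "norm v \<le> R" by (simp add: R_def)
      have Rc: "c * R > 2 * norm e"
      proof -
        have "2 * norm e / c < R" by (simp add: R_def)
        then show ?thesis using c(1) by (simp add: field_simps)
      qed
      define Kc where "Kc = K \<times> cball (0::real^'n) R"
      have cKc: "compact Kc" unfolding Kc_def by (intro compact_Times cK compact_cball)
      have neKc: "Kc \<noteq> {}" using pK R0 by (auto simp: Kc_def)
      have ce: "continuous_on Kc (\<lambda>z. HM f (fst z) $ i $ j)" for i j
      proof -
        have "fst ` Kc \<subseteq> K" by (auto simp: Kc_def)
        then show ?thesis by (rule continuous_on_compose2[OF contK continuous_on_fst[OF continuous_on_id]])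
      qed
      have "continuous_on Kc (\<lambda>z. 2 * (snd z \<bullet> e) - (\<Sum>i\<in>UNIV. snd z $ i * (\<Sum>j\<in>UNIV. HM f (fst z) $ i $ j * snd z $ j)) - \<delta> * snd (fst z))"
        by (intro continuous_on_diff continuous_on_sum continuous_on_mult ce continuous_intros)
      then have cont: "continuous_on Kc (\<lambda>z. \<Psi> \<delta> (fst z) (snd z))"
        unfolding \<Psi>_def quad_expand .
      obtain z0 where z0: "z0 \<in> Kc" "\<forall>z\<in>Kc. \<Psi> \<delta> (fst z) (snd z) \<le> \<Psi> \<delta> (fst z0) (snd z0)"
        using continuous_attains_sup[OF cKc neKc cont] by blast
      obtain x0 t0 v0 where z0eq: "z0 = ((x0, t0), v0)" by (metis prod.collapse)
      have p0K: "(x0, t0) \<in> K" and v0R: "norm v0 \<le> R" using z0(1) by (auto simp: Kc_def z0eq)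
      have x0cl: "x0 \<in> closure \<Omega>" and t0: "0 \<le> t0" "t0 \<le> T" using p0K by (auto simp: K_def)
      have maxz: "\<Psi> \<delta> q w \<le> \<Psi> \<delta> (x0, t0) v0" if "q \<in> K" "norm w \<le> R" for q w
        using z0(2) that by (force simp: Kc_def z0eq)
      have v0lt: "norm v0 < R"
      proof (rule ccontr)
        assume "\<not> norm v0 < R"
        then have nv: "norm v0 = R" using v0R by simp
        have "\<Psi> \<delta> (x0, t0) 0 \<le> \<Psi> \<delta> (x0, t0) v0" using maxz[OF p0K] R0 by simp
        then have "0 \<le> 2 * (v0 \<bullet> e) - v0 \<bullet> (HM f (x0, t0) *v v0)" by (simp add: \<Psi>_def)
        moreover have "v0 \<bullet> e \<le> R * norm e" using norm_cauchy_schwarz[of v0 e] nv by simp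
        moreover have "v0 \<bullet> (HM f (x0, t0) *v v0) \<ge> c * R^2" using c(2)[OF p0K, of v0] nv by simp
        moreover have "2 * (R * norm e) < c * R^2"
        proof -
          have "2 * norm e * R < (c * R) * R" using Rc R0 by (intro mult_strict_right_mono) auto
          then show ?thesis by (simp add: power2_eq_square algebra_simps)
        qed
        ultimately show False by linarith
      qed
      have bound: "\<Psi> \<delta> (x0, t0) v0 \<le> (norm e)^2 / \<epsilon>"
      proof (cases "x0 \<in> frontier \<Omega> \<or> t0 = 0")
        case True
        then have "\<forall>y. y \<bullet> (HM f (x0, t0) *v y) \<ge> \<epsilon> * (norm y)^2" using geps[OF p0K] by simp
        from eps_bound[OF eps this, of v0 e]
        have "2 * (v0 \<bullet> e) - v0 \<bullet> (HM f (x0, t0) *v v0) \<le> (norm e)^2 / \<epsilon>" .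
        moreover have "\<delta> * t0 \<ge> 0" using \<delta> t0 by simp
        ultimately show ?thesis by (simp add: \<Psi>_def)
      next
        case False
        then have x0O: "x0 \<in> \<Omega>" and t0p: "t0 > 0" using notfront[OF x0cl] t0 by auto
        have t0I: "t0 \<in> {0<..T}" using t0p t0 by simp
        have OU: "(x, t0) \<in> U" if "x \<in> \<Omega>" for x using OmK[OF that] t0 KU' by auto
        have sol: "posdef (hess u x t0) \<and> time_deriv u x t0 = F (hess u x t0)" if "x \<in> \<Omega>" for x
          using solution that t0I by blast
        have pd: "posdef (HM f (x, t0))" if "x \<in> \<Omega>" for x
          using sol[OF that] hessHM[OF OU[OF that]] by simp
        have eqn: "Dl [tau] f (x, t0) = F (HM f (x, t0))" if "x \<in> \<Omega>" for x
          using sol[OF that] hessHM[OF OU[OF that]] tdD[OF OU[OF that]] by simp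
        have tU: "(x0, t0 - h) \<in> U" if "0 < h" "h < t0" for h
          using OmK[OF x0O, of "t0 - h"] that t0 KU' by auto
        have maxt: "\<Psi> \<delta> (x0, t0 - h) v0 \<le> \<Psi> \<delta> (x0, t0) v0" if "0 < h" "h < t0" for h
          using maxz[OF OmK[OF x0O, of "t0 - h"] v0R] that t0 by auto
        have maxx: "\<Psi> \<delta> (x, t0) w \<le> \<Psi> \<delta> (x0, t0) v0" if "x \<in> \<Omega>" "norm w \<le> R" for x w
          using maxz[OF OmK[OF that(1)] that(2)] t0 by auto
        have \<Psi>def: "\<Psi> \<delta> q w = 2 * (w \<bullet> e) - w \<bullet> (HM f q *v w) - \<delta> * snd q" for q w
          by (simp add: \<Psi>_def)
        have False
          by (rule interior_contra[OF smf U C2 F_mono F_star_concave dom(1) x0O OU pd eqn \<delta> t0p tU v0lt maxt maxx \<Psi>def])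
        then show ?thesis ..
      qed
      have "\<Psi> \<delta> p v \<le> \<Psi> \<delta> (x0, t0) v0" by (rule maxz[OF pK Rv])
      then show ?thesis using bound by simp
    qed
    show ?thesis
    proof (rule ccontr)
      assume "\<not> 2 * (v \<bullet> e) - v \<bullet> (HM f p *v v) \<le> (norm e)^2 / \<epsilon>"
      then have g: "2 * (v \<bullet> e) - v \<bullet> (HM f p *v v) - (norm e)^2 / \<epsilon> > 0" by simp
      define g where "g = 2 * (v \<bullet> e) - v \<bullet> (HM f p *v v) - (norm e)^2 / \<epsilon>"
      define tp where "tp = \<bar>snd p\<bar> + 1"
      have tp: "tp > 0" by (simp add: tp_def add_nonneg_pos)
      define \<delta> where "\<delta> = g / (2 * tp)"
      have \<delta>: "\<delta> > 0" using g tp by (simp add: \<delta>_def g_def)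
      have "\<delta> * snd p \<le> \<delta> * tp" using \<delta> by (intro mult_left_mono) (auto simp: tp_def)
      also have "\<delta> * tp = g / 2" using tp by (simp add: \<delta>_def)
      finally have "\<delta> * snd p < g" using g by (simp add: g_def)
      moreover have "\<Psi> \<delta> p v \<le> (norm e)^2 / \<epsilon>" by (rule dclaim[OF \<delta>])
      ultimately show False by (simp add: \<Psi>_def g_def)
    qed
  qed
  show "mat_ge (hess u x1 t1) (\<epsilon> *\<^sub>R mat 1)"
    unfolding mat_ge_iff
  proof
    fix y
    have pK: "(x1, t1) \<in> K" by (rule OmK[OF x1 t1])
    have pU: "(x1, t1) \<in> U" using pK KU' by auto
    have h1: "2 * (y \<bullet> (\<epsilon> *\<^sub>R y)) - y \<bullet> (HM f (x1, t1) *v y) \<le> (norm (\<epsilon> *\<^sub>R y))^2 / \<epsilon>"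
      by (rule claim[OF pK])
    have h2: "y \<bullet> (\<epsilon> *\<^sub>R y) = \<epsilon> * (norm y)^2" by (simp add: power2_norm_eq_inner)
    have h3: "(norm (\<epsilon> *\<^sub>R y))^2 / \<epsilon> = \<epsilon> * (norm y)^2"
      using eps by (simp add: power_mult_distrib power2_eq_square)
    from h1 h2 h3 have "\<epsilon> * (norm y)^2 \<le> y \<bullet> (HM f (x1, t1) *v y)" by linarith
    then show "y \<bullet> (hess u x1 t1 *v y) \<ge> \<epsilon> * (norm y)^2"
      using hessHM[OF pU] by simp
  qed
qed

end
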